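(* Let $\lambda>0$ and let $h$ be a $2\pi$-periodic analytic function on a neighborhood of $\{z:|\operatorname{Im}z|\le\lambda\}$ that does not vanish for $|\operatorname{Im}z|<\lambda$, with $\log h$ a continuous branch of its logarithm on the open strip extended to $\operatorname{Im}z=\pm\lambda$ (away from zeros of $h$) by limits from inside the strip. Suppose $h$ vanishes to order $k$ at $z_0=t_0+i\lambda$. Then for every $\chi\in C_c^\infty(S^1)$ supported in a sufficiently small neighborhood of $t_0$ with $\chi\equiv1$ near $t_0$, $$\int_{S^1}\chi(t)\log h(t+i\lambda)e^{int}\,dt=-\frac{2\pi k}{|n|}e^{int_0}+O(n^{-2})\qquad (n\to+\infty).$$ Similarly, if $h$ vanishes to order $k$ at $z_0=t_0-i\lambda$, then for such $\chi$, $$\int_{S^1}\chi(t)\log h(t-i\lambda)e^{int}\,dt=-\frac{2\pi k}{|n|}e^{int_0}+O(n^{-2})\qquad (n\to-\infty).$$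
   Context: $S^1=\mathbb{R}/2\pi\mathbb{Z}$. *)

theory Defs
  imports "HOL-Complex_Analysis.Complex_Analysis" "HOL-Library.Landau_Symbols"
begin

definition smooth_real :: "(real \<Rightarrow> real) \<Rightarrow> bool" where
  "smooth_real f \<longleftrightarrow> (\<forall>m::nat. \<forall>t. ((deriv ^^ m) f) differentiable (at t))"

definition closed_strip :: "real \<Rightarrow> complex set" where
  "closed_strip lam = {z. \<bar>Im z\<bar> \<le> lam}"

definition open_strip :: "real \<Rightarrow> complex set" where
  "open_strip lam = {z. \<bar>Im z\<bar> < lam}"

end

theory Submission
  imports Defs
begin


definition C2_at :: "(real \<Rightarrow> complex) \<Rightarrow> real \<Rightarrow> bool" where
  "C2_at f t \<longleftrightarrow> (\<exists>d>0. \<exists>f1 f2. (\<forall>s. dist s t < d \<longrightarrow>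
      (f has_vector_derivative f1 s) (at s) \<and> (f1 has_vector_derivative f2 s) (at s))
      \<and> continuous_on (ball t d) f2)"

lemma C2_atI:
  assumes "d > 0" "\<And>s. dist s t < d \<Longrightarrow> (f has_vector_derivative f1 s) (at s)"
    "\<And>s. dist s t < d \<Longrightarrow> (f1 has_vector_derivative f2 s) (at s)"
    "continuous_on (ball t d) f2"
  shows "C2_at f t"
  unfolding C2_at_def using assms by blast

lemma C2_at_transform:
  assumes "C2_at g t" "d > 0" "\<And>s. dist s t < d \<Longrightarrow> f s = g s"
  shows "C2_at f t"
proof -
  obtain d' f1 f2 where d': "d' > 0" and D: "\<And>s. dist s t < d' \<Longrightarrow>
      (g has_vector_derivative f1 s) (at s) \<and> (f1 has_vector_derivative f2 s) (at s)"
    and c: "continuous_on (ball t d') f2"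
    using assms(1) unfolding C2_at_def by blast
  define e where "e = min d d'"
  have e: "e > 0" using d' assms(2) by (simp add: e_def)
  have "(f has_vector_derivative f1 s) (at s) \<and> (f1 has_vector_derivative f2 s) (at s)"
    if "dist s t < e" for s
  proof
    show "(f has_vector_derivative f1 s) (at s)"
    proof (rule has_vector_derivative_transform_within_open[of g _ _ "ball t e"])
      show "(g has_vector_derivative f1 s) (at s)" using D that by (simp add: e_def)
      show "s \<in> ball t e" using that by (simp add: dist_commute)
      show "g y = f y" if "y \<in> ball t e" for y using that assms(3) by (simp add: e_def dist_commute)
    qed auto
    show "(f1 has_vector_derivative f2 s) (at s)" using D that by (simp add: e_def)
  qed
  moreover have "continuous_on (ball t e) f2"
    using c by (rule continuous_on_subset) (auto simp: e_def)
  ultimately show ?thesis unfolding C2_at_def using e by blast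
qed

lemma C2_at_const: "C2_at (\<lambda>s. c) t"
  unfolding C2_at_def
  by (rule exI[of _ 1], simp, rule exI[of _ "\<lambda>s. 0"], rule exI[of _ "\<lambda>s. 0"])
     (auto intro: derivative_eq_intros)

lemma C2_at_cont:
  assumes "C2_at f t"
  shows "\<exists>d>0. \<exists>f1 f2. (\<forall>s. dist s t < d \<longrightarrow>
      (f has_vector_derivative f1 s) (at s) \<and> (f1 has_vector_derivative f2 s) (at s))
      \<and> continuous_on (ball t d) f2 \<and> continuous_on (ball t d) f1 \<and> continuous_on (ball t d) f"
proof -
  obtain d f1 f2 where d: "d > 0" and D: "\<And>s. dist s t < d \<Longrightarrow>
      (f has_vector_derivative f1 s) (at s) \<and> (f1 has_vector_derivative f2 s) (at s)"
    and c: "continuous_on (ball t d) f2"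
    using assms(1) unfolding C2_at_def by blast
  have "continuous_on (ball t d) f1"
    by (rule continuous_on_vector_derivative[where f'=f2])
       (use D in \<open>auto simp: dist_commute intro: has_vector_derivative_at_within\<close>)
  moreover have "continuous_on (ball t d) f"
    by (rule continuous_on_vector_derivative[where f'=f1])
       (use D in \<open>auto simp: dist_commute intro: has_vector_derivative_at_within\<close>)
  ultimately show ?thesis using d D c by blast
qed

lemma C2_at_add:
  assumes "C2_at f t" "C2_at g t"
  shows "C2_at (\<lambda>s. f s + g s) t"
proof -
  obtain d f1 f2 where d: "d > 0" and D: "\<And>s. dist s t < d \<Longrightarrow>
      (f has_vector_derivative f1 s) (at s) \<and> (f1 has_vector_derivative f2 s) (at s)"
    and c: "continuous_on (ball t d) f2"
    using assms(1) unfolding C2_at_def by blast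
  obtain d' g1 g2 where d': "d' > 0" and D': "\<And>s. dist s t < d' \<Longrightarrow>
      (g has_vector_derivative g1 s) (at s) \<and> (g1 has_vector_derivative g2 s) (at s)"
    and c': "continuous_on (ball t d') g2"
    using assms(2) unfolding C2_at_def by blast
  define e where "e = min d d'"
  have "continuous_on (ball t e) (\<lambda>s. f2 s + g2 s)"
    by (rule continuous_on_add[OF continuous_on_subset[OF c] continuous_on_subset[OF c']])
       (auto simp: e_def)
  moreover have "((\<lambda>s. f s + g s) has_vector_derivative (f1 s + g1 s)) (at s) \<and>
     ((\<lambda>s. f1 s + g1 s) has_vector_derivative (f2 s + g2 s)) (at s)" if "dist s t < e" for s
    using D[of s] D'[of s] that by (auto simp: e_def intro!: has_vector_derivative_add)
  ultimately show ?thesis using d d'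
    by (intro C2_atI[of e _ _ "\<lambda>s. f1 s + g1 s" "\<lambda>s. f2 s + g2 s"]) (simp_all add: e_def)
qed

lemma C2_at_neg:
  assumes "C2_at f t"
  shows "C2_at (\<lambda>s. - f s) t"
proof -
  obtain d f1 f2 where d: "d > 0" and D: "\<And>s. dist s t < d \<Longrightarrow>
      (f has_vector_derivative f1 s) (at s) \<and> (f1 has_vector_derivative f2 s) (at s)"
    and c: "continuous_on (ball t d) f2"
    using assms(1) unfolding C2_at_def by blast
  have "continuous_on (ball t d) (\<lambda>s. - f2 s)"
    using c by (rule continuous_on_minus)
  moreover have "((\<lambda>s. - f s) has_vector_derivative (- f1 s)) (at s) \<and>
     ((\<lambda>s. - f1 s) has_vector_derivative (- f2 s)) (at s)" if "dist s t < d" for s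
    using D[of s] that by (auto intro!: has_vector_derivative_minus)
  ultimately show ?thesis using d
    by (intro C2_atI[of d _ _ "\<lambda>s. - f1 s" "\<lambda>s. - f2 s"]) simp_all
qed

lemma C2_at_diff:
  assumes "C2_at f t" "C2_at g t"
  shows "C2_at (\<lambda>s. f s - g s) t"
  using C2_at_add[OF assms(1) C2_at_neg[OF assms(2)]] by simp

lemma C2_at_mult:
  assumes "C2_at f t" "C2_at g t"
  shows "C2_at (\<lambda>s. f s * g s) t"
proof -
  obtain d f1 f2 where d: "d > 0" and D: "\<And>s. dist s t < d \<Longrightarrow>
      (f has_vector_derivative f1 s) (at s) \<and> (f1 has_vector_derivative f2 s) (at s)"
    and c: "continuous_on (ball t d) f2" "continuous_on (ball t d) f1" "continuous_on (ball t d) f"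
    using C2_at_cont[OF assms(1)] by blast
  obtain d' g1 g2 where d': "d' > 0" and D': "\<And>s. dist s t < d' \<Longrightarrow>
      (g has_vector_derivative g1 s) (at s) \<and> (g1 has_vector_derivative g2 s) (at s)"
    and c': "continuous_on (ball t d') g2" "continuous_on (ball t d') g1" "continuous_on (ball t d') g"
    using C2_at_cont[OF assms(2)] by blast
  define e where "e = min d d'"
  have sub: "ball t e \<subseteq> ball t d" "ball t e \<subseteq> ball t d'" by (auto simp: e_def)
  have "continuous_on (ball t e) (\<lambda>s. f s * g2 s + f1 s * g1 s + (f1 s * g1 s + f2 s * g s))"
    using continuous_on_subset[OF c(1) sub(1)] continuous_on_subset[OF c(2) sub(1)]
      continuous_on_subset[OF c(3) sub(1)] continuous_on_subset[OF c'(1) sub(2)]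
      continuous_on_subset[OF c'(2) sub(2)] continuous_on_subset[OF c'(3) sub(2)]
    by (intro continuous_intros) auto
  moreover have "((\<lambda>s. f s * g s) has_vector_derivative (f s * g1 s + f1 s * g s)) (at s) \<and>
     ((\<lambda>s. f s * g1 s + f1 s * g s) has_vector_derivative
        (f s * g2 s + f1 s * g1 s + (f1 s * g1 s + f2 s * g s))) (at s)" if "dist s t < e" for s
  proof -
    have a: "(f has_vector_derivative f1 s) (at s)" "(f1 has_vector_derivative f2 s) (at s)"
      "(g has_vector_derivative g1 s) (at s)" "(g1 has_vector_derivative g2 s) (at s)"
      using D[of s] D'[of s] that by (auto simp: e_def)
    show ?thesis
      using has_vector_derivative_mult[OF a(1) a(3)]
        has_vector_derivative_add[OF has_vector_derivative_mult[OF a(1) a(4)]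
           has_vector_derivative_mult[OF a(2) a(3)]]
      by simp
  qed
  ultimately show ?thesis using d d'
    by (intro C2_atI[of e _ _ "\<lambda>s. f s * g1 s + f1 s * g s"
       "\<lambda>s. f s * g2 s + f1 s * g1 s + (f1 s * g1 s + f2 s * g s)"]) (simp_all add: e_def)
qed

lemma C2_at_smooth:
  assumes "smooth_real chi"
  shows "C2_at (\<lambda>s. complex_of_real (chi s)) t"
proof -
  have d0: "chi differentiable (at s)" for s using assms unfolding smooth_real_def
    by (metis funpow_0)
  have d1: "deriv chi differentiable (at s)" for s using assms unfolding smooth_real_def
    by (metis funpow_0 funpow.simps(2) o_apply)
  have d2: "deriv (deriv chi) differentiable (at s)" for s using assms unfolding smooth_real_def
    by (metis funpow_0 funpow.simps(2) o_apply)
  have "continuous_on (ball t 1) (\<lambda>s. complex_of_real (deriv (deriv chi) s))"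
    using d2 by (intro continuous_intros continuous_at_imp_continuous_on)
       (auto intro: differentiable_imp_continuous_within)
  moreover have "((\<lambda>s. complex_of_real (chi s)) has_vector_derivative of_real (deriv chi s)) (at s) \<and>
     ((\<lambda>s. complex_of_real (deriv chi s)) has_vector_derivative of_real (deriv (deriv chi) s)) (at s)" for s
    using d0 d1 by (auto intro!: has_vector_derivative_of_real simp: DERIV_deriv_iff_real_differentiable)
  ultimately show ?thesis
    by (intro C2_atI[of 1 _ _ "\<lambda>s. complex_of_real (deriv chi s)"
       "\<lambda>s. complex_of_real (deriv (deriv chi) s)"]) simp_all
qed

lemma C2_at_hol:
  assumes "f holomorphic_on S" "open S" "of_real t + c \<in> S"
  shows "C2_at (\<lambda>s. f (of_real s + c)) t"
proof -
  obtain d where d: "d > 0" "ball (of_real t + c) d \<subseteq> S" using assms(2,3) openE by blast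
  have hd: "deriv f holomorphic_on S" "deriv (deriv f) holomorphic_on S"
    using assms(1,2) by (auto intro!: holomorphic_deriv)
  have inS: "of_real s + c \<in> S" if "dist s t < d" for s
  proof -
    have "dist (of_real s + c) (of_real t + c) = dist s t"
      by (simp add: dist_norm flip: of_real_diff)
    then show ?thesis using d that by (auto simp: dist_commute)
  qed
  have der: "((\<lambda>s. g (of_real s + c)) has_vector_derivative deriv g (of_real s + c)) (at s)"
    if "g holomorphic_on S" "dist s t < d" for g s
  proof -
    have "(g has_field_derivative deriv g (of_real s + c)) (at (of_real s + c))"
      using that inS assms(2) holomorphic_derivI by blast
    moreover have "((\<lambda>s. complex_of_real s + c) has_vector_derivative 1) (at s)"
      by (auto intro!: derivative_eq_intros)
    ultimately show ?thesis using field_vector_diff_chain_at[of "\<lambda>s. of_real s + c" 1 s g]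
      by (auto simp: o_def)
  qed
  have "continuous_on (ball t d) (\<lambda>s. deriv (deriv f) (of_real s + c))"
  proof (rule continuous_on_compose2[of S "deriv (deriv f)" "ball t d" "\<lambda>s. complex_of_real s + c"])
    show "continuous_on S (deriv (deriv f))" using hd holomorphic_on_imp_continuous_on by blast
    show "continuous_on (ball t d) (\<lambda>s. complex_of_real s + c)" by (intro continuous_intros)
    show "(\<lambda>s. complex_of_real s + c) ` ball t d \<subseteq> S" using inS by (auto simp: dist_commute)
  qed
  moreover have "((\<lambda>s. f (of_real s + c)) has_vector_derivative deriv f (of_real s + c)) (at s) \<and>
     ((\<lambda>s. deriv f (of_real s + c)) has_vector_derivative deriv (deriv f) (of_real s + c)) (at s)"
    if "dist s t < d" for s
    using der[OF assms(1) that] der[OF hd(1) that] by blast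
  ultimately show ?thesis using d(1)
    by (intro C2_atI[of d _ _ "\<lambda>s. deriv f (of_real s + c)" "\<lambda>s. deriv (deriv f) (of_real s + c)"])
      simp_all
qed



lemma C2_global:
  assumes "C2_at f t"
  shows "(f has_vector_derivative vector_derivative f (at t)) (at t)"
    and "((\<lambda>s. vector_derivative f (at s)) has_vector_derivative
           vector_derivative (\<lambda>s. vector_derivative f (at s)) (at t)) (at t)"
    and "isCont (\<lambda>s. vector_derivative (\<lambda>s. vector_derivative f (at s)) (at s)) t"
proof -
  obtain d f1 f2 where d: "d > 0" and D: "\<And>s. dist s t < d \<Longrightarrow>
      (f has_vector_derivative f1 s) (at s) \<and> (f1 has_vector_derivative f2 s) (at s)"
    and c: "continuous_on (ball t d) f2"
    using assms(1) unfolding C2_at_def by blast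
  have V1: "vector_derivative f (at s) = f1 s" if "s \<in> ball t d" for s
  proof -
    have "dist s t < d" using that by (simp add: dist_commute)
    then have "(f has_vector_derivative f1 s) (at s)" using D by blast
    then show ?thesis by (rule vector_derivative_at)
  qed
  have D2: "((\<lambda>s. vector_derivative f (at s)) has_vector_derivative f2 s) (at s)"
    if "s \<in> ball t d" for s
  proof (rule has_vector_derivative_transform_within_open[of f1 _ _ "ball t d"])
    have "dist s t < d" using that by (simp add: dist_commute)
    then show "(f1 has_vector_derivative f2 s) (at s)" using D by blast
    show "f1 y = vector_derivative f (at y)" if "y \<in> ball t d" for y using V1[OF that] by simp
  qed (use that in auto)
  have V2: "vector_derivative (\<lambda>s. vector_derivative f (at s)) (at s) = f2 s"
    if "s \<in> ball t d" for s
    using D2[OF that] by (rule vector_derivative_at)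
  have t: "t \<in> ball t d" using d by simp
  show "(f has_vector_derivative vector_derivative f (at t)) (at t)"
    using D[of t] d V1[OF t] by simp
  show "((\<lambda>s. vector_derivative f (at s)) has_vector_derivative
           vector_derivative (\<lambda>s. vector_derivative f (at s)) (at t)) (at t)"
    using D2[OF t] V2[OF t] by simp
  have "continuous_on (ball t d) (\<lambda>s. vector_derivative (\<lambda>s. vector_derivative f (at s)) (at s))"
    using c by (rule continuous_on_eq) (simp add: V2)
  then show "isCont (\<lambda>s. vector_derivative (\<lambda>s. vector_derivative f (at s)) (at s)) t"
    using t by (simp add: continuous_on_eq_continuous_at)
qed

lemma exp_deriv_real:
  "((\<lambda>t. exp (\<i> * of_int n * complex_of_real t)) has_vector_derivative
     (\<i> * of_int n * exp (\<i> * of_int n * complex_of_real t))) (at t within S)"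
proof -
  have "((\<lambda>z. exp (\<i> * of_int n * z)) has_field_derivative
      (exp (\<i> * of_int n * complex_of_real t) * (\<i> * of_int n))) (at (of_real t))"
    by (auto intro!: derivative_eq_intros)
  from has_vector_derivative_real_field[OF this]
  show ?thesis by (simp add: mult.commute)
qed

lemma exp_period_int:
  "exp (\<i> * of_int n * complex_of_real (a + 2 * pi)) = exp (\<i> * of_int n * complex_of_real a)"
proof -
  have "\<i> * of_int n * complex_of_real (a + 2 * pi) =
      \<i> * of_int n * complex_of_real a + \<i> * (of_int n * (of_real pi * 2))"
    by (simp add: algebra_simps)
  then show ?thesis by simp
qed

lemma ibp_period:
  fixes \<phi> \<phi>' :: "real \<Rightarrow> complex"
  assumes b: "b = a + 2*pi" and n: "n \<noteq> 0"
    and D: "\<And>t. t \<in> {a..b} \<Longrightarrow> (\<phi> has_vector_derivative \<phi>' t) (at t)"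
    and c: "continuous_on {a..b} \<phi>'" and per: "\<phi> a = \<phi> b"
  shows "integral {a..b} (\<lambda>t. \<phi> t * exp (\<i> * of_int n * of_real t)) =
     - integral {a..b} (\<lambda>t. \<phi>' t * exp (\<i> * of_int n * of_real t)) / (\<i> * of_int n)"
proof -
  define E where "E = (\<lambda>t. exp (\<i> * of_int n * complex_of_real t))"
  define H where "H = (\<lambda>t. \<phi> t * E t / (\<i> * of_int n))"
  have inz: "\<i> * (of_int n :: complex) \<noteq> 0" using n by simp
  have ab: "a \<le> b" using b by simp
  have "(H has_vector_derivative (\<phi> t * E t + \<phi>' t * E t / (\<i> * of_int n))) (at t within {a..b})"
    if "t \<in> {a..b}" for t
  proof -
    have "(H has_vector_derivative ((\<phi> t * (\<i> * of_int n * E t) + \<phi>' t * E t) / (\<i> * of_int n)))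
        (at t within {a..b})"
      unfolding H_def
      by (intro has_vector_derivative_divide has_vector_derivative_mult
          has_vector_derivative_at_within[OF D[OF that]])
        (unfold E_def, rule exp_deriv_real)
    then show ?thesis using inz by (simp add: field_simps)
  qed
  from fundamental_theorem_of_calculus[OF ab this]
  have I1: "((\<lambda>t. \<phi> t * E t + \<phi>' t * E t / (\<i> * of_int n)) has_integral (H b - H a)) {a..b}" .
  have "E b = E a" unfolding E_def b by (rule exp_period_int)
  then have "H b = H a" unfolding H_def using per by simp
  then have I1': "((\<lambda>t. \<phi> t * E t + \<phi>' t * E t / (\<i> * of_int n)) has_integral 0) {a..b}"
    using I1 by simp
  have cE: "continuous_on {a..b} E" unfolding E_def by (intro continuous_intros)
  have "(\<lambda>t. \<phi>' t * E t) integrable_on {a..b}"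
    by (intro integrable_continuous_interval continuous_on_mult c cE)
  then have I2: "((\<lambda>t. \<phi>' t * E t / (\<i> * of_int n)) has_integral
       integral {a..b} (\<lambda>t. \<phi>' t * E t) / (\<i> * of_int n)) {a..b}"
    using has_integral_divide integrable_integral by blast
  have "((\<lambda>t. \<phi> t * E t) has_integral
      (0 - integral {a..b} (\<lambda>t. \<phi>' t * E t) / (\<i> * of_int n))) {a..b}"
    using has_integral_diff[OF I1' I2] by simp
  then show ?thesis unfolding E_def by (simp add: integral_unique)
qed

lemma fourier_C2:
  fixes f :: "real \<Rightarrow> complex"
  assumes C2: "\<And>t. t \<in> {a..a + 2*pi} \<Longrightarrow> C2_at f t"
    and p0: "f a = f (a + 2*pi)"
    and p1: "vector_derivative f (at a) = vector_derivative f (at (a + 2*pi))"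
  shows "\<exists>C. \<forall>n::int. n \<noteq> 0 \<longrightarrow>
     norm (integral {a..a + 2*pi} (\<lambda>t. f t * exp (\<i> * of_int n * of_real t))) \<le> C / (of_int n)^2"
proof -
  define b where "b = a + 2*pi"
  define f1 where "f1 = (\<lambda>s. vector_derivative f (at s))"
  define f2 where "f2 = (\<lambda>s. vector_derivative f1 (at s))"
  have D1: "(f has_vector_derivative f1 t) (at t)" if "t \<in> {a..b}" for t
    using C2_global(1)[OF C2] that unfolding f1_def b_def by blast
  have D2: "(f1 has_vector_derivative f2 t) (at t)" if "t \<in> {a..b}" for t
    using C2_global(2)[OF C2] that unfolding f1_def f2_def b_def by blast
  have c2: "continuous_on {a..b} f2"
    using C2_global(3)[OF C2] unfolding f1_def f2_def b_def
    by (intro continuous_at_imp_continuous_on) blast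
  have c1: "continuous_on {a..b} f1"
    by (rule continuous_on_vector_derivative[where f'=f2])
       (use D2 in \<open>auto intro: has_vector_derivative_at_within\<close>)
  have compact: "compact (f2 ` {a..b})" by (intro compact_continuous_image c2) simp
  then obtain M where M: "M > 0" "\<And>x. x \<in> f2 ` {a..b} \<Longrightarrow> norm x \<le> M"
    using compact_imp_bounded bounded_pos by metis
  have key: "norm (integral {a..b} (\<lambda>t. f t * exp (\<i> * of_int n * of_real t))) \<le> (M * (2*pi)) / (of_int n)^2"
    if n: "n \<noteq> 0" for n :: int
  proof -
    define E where "E = (\<lambda>t. exp (\<i> * of_int n * complex_of_real t))"
    have e1: "integral {a..b} (\<lambda>t. f t * E t) = - integral {a..b} (\<lambda>t. f1 t * E t) / (\<i> * of_int n)"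
      unfolding E_def by (rule ibp_period[OF b_def n D1 c1]) (use p0 b_def in simp_all)
    have e2: "integral {a..b} (\<lambda>t. f1 t * E t) = - integral {a..b} (\<lambda>t. f2 t * E t) / (\<i> * of_int n)"
      unfolding E_def by (rule ibp_period[OF b_def n D2 c2]) (use p1 b_def f1_def in simp_all)
    have cE: "continuous_on {a..b} E" unfolding E_def by (intro continuous_intros)
    have int2: "((\<lambda>t. f2 t * E t) has_integral integral {a..b} (\<lambda>t. f2 t * E t)) {a..b}"
      by (intro integrable_integral integrable_continuous_interval continuous_on_mult c2 cE)
    have nE: "norm (E t) = 1" for t unfolding E_def by (simp add: norm_exp)
    have "norm (integral {a..b} (\<lambda>t. f2 t * E t)) \<le> M * measure lborel {a..b}"
      by (rule has_integral_bound_real[where S="{}", OF _ _ int2])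
         (use M in \<open>auto simp: norm_mult nE\<close>)
    also have "measure lborel {a..b} = 2*pi" unfolding b_def by simp
    finally have bnd: "norm (integral {a..b} (\<lambda>t. f2 t * E t)) \<le> M * (2*pi)" .
    have "integral {a..b} (\<lambda>t. f t * E t) = - integral {a..b} (\<lambda>t. f2 t * E t) / (of_int n)^2"
    proof -
      have "(\<i> * of_int n) * (\<i> * of_int n) = - ((of_int n)^2 :: complex)"
        by (simp add: power2_eq_square algebra_simps)
      then show ?thesis unfolding e1 e2 by (simp add: divide_divide_eq_left)
    qed
    then have "norm (integral {a..b} (\<lambda>t. f t * E t)) = norm (integral {a..b} (\<lambda>t. f2 t * E t)) / (of_int n)^2"
      by (simp add: norm_divide norm_power)
    also have "\<dots> \<le> (M * (2*pi)) / (of_int n)^2"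
      using bnd n by (intro divide_right_mono) auto
    finally show ?thesis unfolding E_def .
  qed
  show ?thesis
    by (rule exI[of _ "M * (2*pi)"]) (use key in \<open>simp add: b_def\<close>)
qed


lemma t1: fixes X :: complex and n :: int assumes "n \<noteq> 0"
  shows "- (- X / (\<i> * of_int n)) / (\<i> * of_int n) = - X / (of_int n)^2"
proof -
  have "(\<i> * of_int n) * (\<i> * of_int n) = - ((of_int n)^2 :: complex)"
    by (simp add: power2_eq_square algebra_simps)
  then show ?thesis by (simp add: divide_divide_eq_left)
qed
lemma t2: fixes M :: real and n :: int assumes "n \<noteq> 0" "X \<le> M * (2*pi)"
  shows "X / (of_int n)^2 \<le> (M * (2*pi)) / (of_int n)^2"
  using assms by (intro divide_right_mono) auto


lemma norm_Ln_bound: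
  fixes w :: complex assumes "w \<noteq> 0"
  shows "norm (Ln w) \<le> \<bar>ln (norm w)\<bar> + pi"
proof -
  have "norm (Ln w) \<le> \<bar>Re (Ln w)\<bar> + \<bar>Im (Ln w)\<bar>" by (rule cmod_le)
  moreover have "\<bar>Im (Ln w)\<bar> \<le> pi" using mpi_less_Im_Ln[of w] Im_Ln_le_pi[of w] assms by auto
  ultimately show ?thesis using assms by simp
qed

lemma rlnr_bound:
  fixes r :: real assumes "0 < r" "r \<le> 1"
  shows "r * \<bar>ln r\<bar> \<le> 2 * sqrt r"
proof -
  have sr: "sqrt r > 0" using assms by simp
  have "ln (1 / sqrt r) < 1 / sqrt r" using sr by (intro ln_less_self) simp
  moreover have "ln (1 / sqrt r) = - ln r / 2"
    using assms by (simp add: ln_div ln_sqrt)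
  moreover have "ln r \<le> 0" using assms by simp
  ultimately have "\<bar>ln r\<bar> \<le> 2 / sqrt r" by simp
  then have "r * \<bar>ln r\<bar> \<le> r * (2 / sqrt r)" using assms by (intro mult_left_mono) auto
  also have "r * (2 / sqrt r) = 2 * sqrt r"
    using assms by (simp add: field_simps real_sqrt_mult[symmetric])
  finally show ?thesis .
qed

lemma wLn_tendsto: "((\<lambda>w::complex. w * Ln w) \<longlongrightarrow> 0) (at 0)"
proof (rule Lim_null_comparison)
  show "\<forall>\<^sub>F w in at 0. norm (w * Ln w) \<le> 2 * sqrt (norm w) + pi * norm w"
    unfolding eventually_at
  proof (intro exI[of _ 1] conjI ballI impI)
    fix w :: complex assume w: "w \<noteq> 0 \<and> dist w 0 < 1"
    then have w0: "w \<noteq> 0" and w1: "norm w \<le> 1" by auto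
    have "norm (w * Ln w) = norm w * norm (Ln w)" by (simp add: norm_mult)
    also have "\<dots> \<le> norm w * (\<bar>ln (norm w)\<bar> + pi)"
      by (intro mult_left_mono norm_Ln_bound w0) simp
    also have "\<dots> = norm w * \<bar>ln (norm w)\<bar> + pi * norm w" by (simp add: algebra_simps)
    also have "\<dots> \<le> 2 * sqrt (norm w) + pi * norm w"
      using rlnr_bound[of "norm w"] w0 w1 by simp
    finally show "norm (w * Ln w) \<le> 2 * sqrt (norm w) + pi * norm w" .
  qed simp
  have "((\<lambda>w::complex. 2 * sqrt (norm w) + pi * norm w) \<longlongrightarrow> 2 * sqrt (norm (0::complex)) + pi * norm (0::complex)) (at 0)"
    by (intro tendsto_intros)
  then show "((\<lambda>w::complex. 2 * sqrt (norm w) + pi * norm w) \<longlongrightarrow> 0) (at 0)" by simp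
qed

lemma isCont_wLn:
  fixes w :: complex assumes "w = 0 \<or> w \<notin> \<real>\<^sub>\<le>\<^sub>0"
  shows "isCont (\<lambda>w. w * Ln w) w"
proof (cases "w = 0")
  case True
  then show ?thesis using wLn_tendsto by (simp add: isCont_def)
next
  case False
  then have "w \<notin> \<real>\<^sub>\<le>\<^sub>0" using assms by blast
  then show ?thesis by (intro continuous_intros continuous_at_Ln)
qed

lemma exp_integral_zero:
  fixes N :: int assumes "N \<noteq> 0"
  shows "((\<lambda>t. exp (\<i> * of_int N * complex_of_real t)) has_integral 0) {a..a + 2*pi}"
proof -
  have "integral {a..a + 2*pi} (\<lambda>t. 1 * exp (\<i> * of_int N * complex_of_real t)) =
      - integral {a..a + 2*pi} (\<lambda>t. 0 * exp (\<i> * of_int N * complex_of_real t)) / (\<i> * of_int N)"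
    by (rule ibp_period[where \<phi>' = "\<lambda>t. 0"]) (use assms in \<open>auto intro: derivative_eq_intros\<close>)
  moreover have "(\<lambda>t. exp (\<i> * of_int N * complex_of_real t)) integrable_on {a..a + 2*pi}"
    by (intro integrable_continuous_interval continuous_intros)
  ultimately show ?thesis by (simp add: has_integral_integral)
qed



lemma cos_lt_1:
  fixes x :: real assumes "x \<noteq> 0" "\<bar>x\<bar> \<le> pi"
  shows "cos x < 1"
proof (cases "x > 0")
  case True
  then show ?thesis using cos_monotone_0_pi[of 0 x] assms by simp
next
  case False
  then have "cos (-x) < cos 0" using cos_monotone_0_pi[of 0 "-x"] assms by simp
  then show ?thesis by simp
qed

lemma sing_integral:
  fixes \<sigma> n :: int and t0 :: real
  assumes \<sigma>: "\<sigma> = 1 \<or> \<sigma> = -1" and pos: "\<sigma> * n > 0"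
  shows "((\<lambda>t. Ln (1 - exp (- (\<i> * of_int \<sigma> * (complex_of_real t - complex_of_real t0))))
              * exp (\<i> * of_int n * complex_of_real t))
     has_integral (- complex_of_real (2 * pi / real_of_int \<bar>n\<bar>) * exp (\<i> * of_int n * complex_of_real t0)))
     {t0 - pi..t0 + pi}"
proof -
  define m where "m = nat (\<sigma> * n)"
  have \<sigma>\<sigma>: "\<sigma> * \<sigma> = 1" using \<sigma> by auto
  have m1: "m \<ge> 1" using pos by (simp add: m_def)
  have nm: "n = \<sigma> * int m" using pos \<sigma>\<sigma> unfolding m_def
    by (metis mult.assoc mult_1 nat_0_le order_less_imp_le)
  have absn: "\<bar>n\<bar> = int m" using nm \<sigma> by auto
  have n0: "n \<noteq> 0" using pos by auto
  define a where "a = t0 - pi"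
  define b where "b = t0 + pi"
  have ba: "b = a + 2 * pi" by (simp add: a_def b_def)
  define z where "z = (\<lambda>t. \<i> * of_int \<sigma> * (complex_of_real t - complex_of_real t0))"
  define u where "u = (\<lambda>t. 1 - exp (- z t))"
  define v where "v = (\<lambda>t. exp (z t))"
  define E where "E = (\<lambda>t. exp (\<i> * of_int n * complex_of_real t))"
  define S where "S = (\<lambda>t. \<Sum>j<m. v t ^ j)"
  define H where "H = (\<lambda>t. Ln (u t) * (E t - E t0) / (\<i> * of_int n))"
  have inz: "\<i> * (of_int n :: complex) \<noteq> 0" using n0 by simp
  have f1: "E t = E t0 * v t ^ m" for t
  proof -
    have "\<i> * of_int n * complex_of_real t = \<i> * of_int n * complex_of_real t0 + of_nat m * z t"
      by (simp add: z_def nm algebra_simps)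
    then have "E t = exp (\<i> * of_int n * complex_of_real t0 + of_nat m * z t)" by (simp add: E_def)
    also have "\<dots> = E t0 * v t ^ m" by (simp add: exp_add E_def v_def exp_of_nat_mult)
    finally show ?thesis .
  qed
  have f2: "v t * u t = v t - 1" for t
  proof -
    have e: "v t * exp (- z t) = 1" unfolding v_def by (rule exp_minus_inverse)
    show ?thesis by (simp only: u_def right_diff_distrib mult_1_right e)
  qed
  have f3: "E t - E t0 = E t0 * v t * u t * S t" for t
  proof -
    have "E t - E t0 = E t0 * (v t ^ m - 1)" by (simp add: f1[of t] right_diff_distrib)
    also have "\<dots> = E t0 * ((v t - 1) * S t)" by (simp only: S_def power_diff_1_eq)
    also have "\<dots> = E t0 * (v t * u t * S t)" by (simp only: f2)
    also have "\<dots> = E t0 * v t * u t * S t" by (simp only: mult.assoc)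
    finally show ?thesis .
  qed
  have Hform: "H t = E t0 / (\<i> * of_int n) * v t * S t * (u t * Ln (u t))" for t
    by (simp add: H_def f3 algebra_simps)
  have Re_u: "Re (u t) = 1 - cos (t - t0)" for t
  proof -
    have "Re (exp (- z t)) = cos (of_int \<sigma> * (t - t0))"
      by (simp add: z_def Re_exp)
    also have "\<dots> = cos (t - t0)" using \<sigma> cos_minus[of "t - t0"] by auto
    finally show ?thesis by (simp add: u_def)
  qed
  have u_good: "Re (u t) > 0" if "t \<in> {a..b}" "t \<noteq> t0" for t
    using cos_lt_1[of "t - t0"] that Re_u[of t] by (auto simp: a_def b_def)
  have u_nonpos: "u t \<notin> \<real>\<^sub>\<le>\<^sub>0" if "t \<in> {a..b}" "t \<noteq> t0" for t
    using u_good[OF that] by (auto simp: complex_nonpos_Reals_iff)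
  have u_t0: "u t0 = 0" by (simp add: u_def z_def)
  have cont: "continuous_on {a..b} H"
  proof (rule continuous_at_imp_continuous_on, rule ballI)
    fix t assume t: "t \<in> {a..b}"
    have cu: "isCont u t" unfolding u_def z_def by (intro continuous_intros)
    have cv: "isCont v t" unfolding v_def z_def by (intro continuous_intros)
    have cS: "isCont S t" unfolding S_def by (intro continuous_intros cv)
    have cQ: "isCont (\<lambda>w. w * Ln w) (u t)"
      by (rule isCont_wLn) (use u_nonpos[OF t] u_t0 in \<open>cases "t = t0"; auto\<close>)
    have QU: "isCont (\<lambda>t. u t * Ln (u t)) t" using isCont_o2[OF cu cQ] .
    have "isCont (\<lambda>t. E t0 / (\<i> * of_int n) * v t * S t * (u t * Ln (u t))) t"
      by (rule continuous_mult[OF _ QU], intro continuous_intros cv cS)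
    then show "isCont H t" by (simp add: Hform[abs_def])
  qed
  have deriv: "(H has_vector_derivative (Ln (u t) * E t + E t0 * S t / of_nat m)) (at t)"
    if t: "t \<in> {a..b} - {t0}" for t
  proof -
    have tt: "t \<in> {a..b}" "t \<noteq> t0" using t by auto
    have gd: "((\<lambda>w. 1 - exp (- (\<i> * of_int \<sigma> * (w - complex_of_real t0)))) has_field_derivative
        (\<i> * of_int \<sigma> * exp (- z t))) (at (of_real t))"
      unfolding z_def by (rule derivative_eq_intros refl | simp)+
    have du: "(u has_vector_derivative (\<i> * of_int \<sigma> * exp (- z t))) (at t)"
      using has_vector_derivative_real_field[OF gd] unfolding u_def z_def by simp
    have dF: "((\<lambda>t. Ln (u t)) has_vector_derivative (\<i> * of_int \<sigma> * exp (- z t)) * inverse (u t)) (at t)"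
      using field_vector_diff_chain_at[OF du has_field_derivative_Ln[OF u_nonpos[OF tt]]]
      by (simp add: o_def)
    have dE: "(E has_vector_derivative (\<i> * of_int n * E t)) (at t)"
      unfolding E_def by (rule exp_deriv_real)
    have dH: "(H has_vector_derivative
        ((Ln (u t) * (\<i> * of_int n * E t - 0) + (\<i> * of_int \<sigma> * exp (- z t)) * inverse (u t) * (E t - E t0))
          / (\<i> * of_int n))) (at t)"
      unfolding H_def
      by (intro has_vector_derivative_divide has_vector_derivative_mult has_vector_derivative_diff
          dF dE has_vector_derivative_const)
    have u0: "u t \<noteq> 0" using u_good[OF tt] by auto
    have wv: "exp (- z t) * v t = 1" by (simp add: v_def exp_minus_inverse mult.commute)
    have "(\<i> * of_int \<sigma> * exp (- z t)) * inverse (u t) * (E t - E t0)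
        = \<i> * of_int \<sigma> * (exp (- z t) * v t) * E t0 * S t * (u t * inverse (u t))"
      by (simp add: f3 algebra_simps)
    also have "\<dots> = \<i> * of_int \<sigma> * E t0 * S t" using wv u0 by simp
    finally have k1: "(\<i> * of_int \<sigma> * exp (- z t)) * inverse (u t) * (E t - E t0) = \<i> * of_int \<sigma> * E t0 * S t" .
    have k2: "\<i> * of_int \<sigma> * E t0 * S t / (\<i> * of_int n) = E t0 * S t / of_nat m"
    proof -
      have "(\<i> * of_int n :: complex) = (\<i> * of_int \<sigma>) * of_nat m" by (simp add: nm)
      moreover have "(\<i> * of_int \<sigma> :: complex) \<noteq> 0" using \<sigma> by auto
      ultimately show ?thesis using m1 by (simp add: field_simps)
    qed
    have "(Ln (u t) * (\<i> * of_int n * E t - 0) + (\<i> * of_int \<sigma> * exp (- z t)) * inverse (u t) * (E t - E t0))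
          / (\<i> * of_int n) = Ln (u t) * E t + (\<i> * of_int \<sigma> * exp (- z t)) * inverse (u t) * (E t - E t0) / (\<i> * of_int n)"
      using inz by (simp add: add_divide_distrib)
    also have "\<dots> = Ln (u t) * E t + E t0 * S t / of_nat m" by (simp only: k1 k2)
    finally have "(Ln (u t) * (\<i> * of_int n * E t - 0) + (\<i> * of_int \<sigma> * exp (- z t)) * inverse (u t) * (E t - E t0))
          / (\<i> * of_int n) = Ln (u t) * E t + E t0 * S t / of_nat m" .
    then show ?thesis using dH by simp
  qed
  have ab: "a \<le> b" by (simp add: a_def b_def)
  have I1: "((\<lambda>t. Ln (u t) * E t + E t0 * S t / of_nat m) has_integral (H b - H a)) {a..b}"
    by (rule fundamental_theorem_of_calculus_strong[of "{t0}"]) (use ab deriv cont in auto)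
  have Eab: "E b = E a" unfolding E_def ba by (rule exp_period_int)
  have uab: "u b = u a"
  proof -
    have "z b = \<i> * of_int \<sigma> * of_real pi" "z a = - (\<i> * of_int \<sigma> * of_real pi)"
      by (simp_all add: z_def a_def b_def)
    then show ?thesis unfolding u_def using \<sigma> by (auto simp: exp_minus)
  qed
  have "H b = H a" unfolding H_def using Eab uab by simp
  then have I1': "((\<lambda>t. Ln (u t) * E t + E t0 * S t / of_nat m) has_integral 0) {a..b}" using I1 by simp
  have IS: "(S has_integral complex_of_real (2 * pi)) {a..b}"
  proof -
    have each: "((\<lambda>t. v t ^ j) has_integral (if j = 0 then complex_of_real (2 * pi) else 0)) {a..b}" for j
    proof (cases "j = 0")
      case True
      then show ?thesis using has_integral_const_real[of "1::complex" a b] ab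
        by (simp add: a_def b_def scaleR_conv_of_real)
    next
      case False
      have vj: "v t ^ j = exp (\<i> * of_int (\<sigma> * int j) * complex_of_real t) * exp (- (\<i> * of_int (\<sigma> * int j) * complex_of_real t0))" for t
      proof -
        have "v t ^ j = exp (of_nat j * z t)" by (simp add: v_def exp_of_nat_mult)
        also have "of_nat j * z t = \<i> * of_int (\<sigma> * int j) * complex_of_real t + (- (\<i> * of_int (\<sigma> * int j) * complex_of_real t0))"
          by (simp add: z_def algebra_simps)
        finally show ?thesis by (simp only: exp_add)
      qed
      have nz: "\<sigma> * int j \<noteq> 0" using \<sigma> False by auto
      have "((\<lambda>t. exp (\<i> * of_int (\<sigma> * int j) * complex_of_real t) * exp (- (\<i> * of_int (\<sigma> * int j) * complex_of_real t0)))
          has_integral 0 * exp (- (\<i> * of_int (\<sigma> * int j) * complex_of_real t0))) {a..b}"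
        using has_integral_mult_left[OF exp_integral_zero[OF nz, of a]] ba by simp
      then show ?thesis using False by (simp add: vj)
    qed
    have "(S has_integral (\<Sum>j<m. if j = 0 then complex_of_real (2 * pi) else 0)) {a..b}"
      unfolding S_def by (rule has_integral_sum) (use each in auto)
    moreover have "(\<Sum>j<m. if j = 0 then complex_of_real (2 * pi) else 0) = complex_of_real (2 * pi)"
      using m1 by (simp add: sum.delta)
    ultimately show ?thesis by simp
  qed
  have IS2: "((\<lambda>t. E t0 * S t / of_nat m) has_integral (E t0 * complex_of_real (2 * pi) / of_nat m)) {a..b}"
    using has_integral_divide[OF has_integral_mult_right[OF IS, of "E t0"], of "of_nat m"] by simp
  have "((\<lambda>t. Ln (u t) * E t) has_integral (0 - E t0 * complex_of_real (2 * pi) / of_nat m)) {a..b}"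
    using has_integral_diff[OF I1' IS2] by simp
  moreover have "0 - E t0 * complex_of_real (2 * pi) / of_nat m =
      - complex_of_real (2 * pi / real_of_int \<bar>n\<bar>) * E t0"
    by (simp add: absn)
  ultimately show ?thesis by (simp add: u_def z_def E_def a_def b_def)
qed



lemma Ef_props:
  fixes c :: complex assumes c: "c \<noteq> 0"
  defines "Ef \<equiv> \<lambda>u. if u = 0 then 1 else (1 - exp (- (c * u))) / (c * u)"
  shows "Ef holomorphic_on UNIV" "\<And>u. 1 - exp (- (c * u)) = c * u * Ef u"
    "\<exists>r>0. \<forall>u. norm u < r \<longrightarrow> Ef u \<noteq> 0"
proof -
  define f where "f = (\<lambda>u. 1 - exp (- (c * u)))"
  have fd: "(f has_field_derivative c) (at 0)"
    unfolding f_def by (rule derivative_eq_intros refl | simp)+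
  then have "((\<lambda>y. (f y - f 0) / (y - 0)) \<longlongrightarrow> c) (at 0)"
    using has_field_derivative_iff by blast
  then have "((\<lambda>y. f y / y) \<longlongrightarrow> c) (at 0)" by (simp add: f_def)
  then have "((\<lambda>y. f y / y / c) \<longlongrightarrow> c / c) (at 0)" by (intro tendsto_divide tendsto_const) (use c in auto)
  then have lim0: "((\<lambda>y. f y / y / c) \<longlongrightarrow> 1) (at 0)" using c by simp
  have ev: "\<forall>\<^sub>F y in at 0. f y / y / c = Ef y"
    unfolding eventually_at_filter Ef_def f_def by (intro always_eventually) (simp add: divide_divide_eq_left mult.commute)
  have lim: "(Ef \<longlongrightarrow> Ef 0) (at 0)"
    using tendsto_cong[OF ev] lim0 by (simp add: Ef_def)
  have hol0: "Ef holomorphic_on (UNIV - {0})"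
  proof (rule holomorphic_transform[where f = "\<lambda>u. (1 - exp (- (c * u))) / (c * u)"])
    show "(\<lambda>u. (1 - exp (- (c * u))) / (c * u)) holomorphic_on UNIV - {0}"
      using c by (intro holomorphic_intros) auto
  qed (simp add: Ef_def)
  show hol: "Ef holomorphic_on UNIV"
    by (rule no_isolated_singularity'[of "{0}"]) (use lim hol0 in auto)
  show "1 - exp (- (c * u)) = c * u * Ef u" for u
    using c by (cases "u = 0") (auto simp: Ef_def)
  have "isCont Ef 0" using hol holomorphic_on_imp_continuous_on
    by (metis continuous_on_eq_continuous_at open_UNIV UNIV_I)
  from continuous_at_avoid[OF this, of 0]
  obtain e where "e > 0" "\<And>y. dist 0 y < e \<Longrightarrow> Ef y \<noteq> 0" by (auto simp: Ef_def)
  then show "\<exists>r>0. \<forall>u. norm u < r \<longrightarrow> Ef u \<noteq> 0" by (intro exI[of _ e]) (auto simp: dist_norm)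
qed

lemma Re_pos_strip:
  fixes \<sigma> :: int
  assumes \<sigma>: "\<sigma> = 1 \<or> \<sigma> = -1" and w: "\<bar>Im w\<bar> < lam"
  shows "Re (1 - exp (- (\<i> * of_int \<sigma> * (w - (of_real t0 + \<i> * of_int \<sigma> * of_real lam))))) > 0"
proof -
  define X where "X = - (\<i> * of_int \<sigma> * (w - (of_real t0 + \<i> * of_int \<sigma> * of_real lam)))"
  have "Re X = of_int \<sigma> * Im w - lam" using \<sigma> by (auto simp: X_def)
  also have "\<dots> < 0" using \<sigma> w by auto
  finally have "Re X < 0" .
  then have "exp (Re X) < 1" by simp
  moreover have "Re (exp X) \<le> exp (Re X)"
    by (simp add: Re_exp mult_left_le)
  ultimately have "Re (exp X) < 1" by linarith
  then show ?thesis by (simp add: X_def)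
qed



lemma conv_lt:
  fixes a b l u v :: real
  assumes "a < l" "b < l" "0 \<le> u" "0 \<le> v" "u + v = 1"
  shows "u * a + v * b < l"
proof (cases "u = 0")
  case True
  then show ?thesis using assms by simp
next
  case False
  then have "u * a < u * l" using assms by (intro mult_strict_left_mono) auto
  moreover have "v * b \<le> v * l" using assms by (intro mult_left_mono) auto
  ultimately have "u * a + v * b < u * l + v * l" by linarith
  also have "\<dots> = l" using assms by (simp add: distrib_right[symmetric])
  finally show ?thesis .
qed

lemma local_rep:
  fixes \<sigma> :: int and lam t0 :: real and h L :: "complex \<Rightarrow> complex" and k :: nat
  assumes \<sigma>: "\<sigma> = 1 \<or> \<sigma> = -1" and lam_pos: "lam > 0" and U_open: "open U"
    and U_strip: "closed_strip lam \<subseteq> U"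
    and h_holo: "h holomorphic_on U" and h_nonzero: "\<forall>z\<in>open_strip lam. h z \<noteq> 0"
    and L_cont: "continuous_on (open_strip lam) L" and L_log: "\<forall>z\<in>open_strip lam. exp (L z) = h z"
    and L_boundary: "\<forall>z. \<bar>Im z\<bar> = lam \<and> h z \<noteq> 0 \<longrightarrow> (L \<longlongrightarrow> L z) (at z within open_strip lam)"
    and ord: "zorder h (of_real t0 + \<i> * of_int \<sigma> * of_real lam) = int k"
  shows "\<exists>r>0. r \<le> pi \<and> (\<exists>G c. G holomorphic_on ball (of_real t0 + \<i> * of_int \<sigma> * of_real lam) r \<and>
     (\<forall>t. 0 < \<bar>t - t0\<bar> \<and> \<bar>t - t0\<bar> < r \<longrightarrow> L (of_real t + \<i> * of_int \<sigma> * of_real lam) =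
        of_nat k * Ln (1 - exp (- (\<i> * of_int \<sigma> * (of_real t - of_real t0))))
          + G (of_real t + \<i> * of_int \<sigma> * of_real lam) + c))"
proof -
  define z0 where "z0 = of_real t0 + \<i> * of_int \<sigma> * of_real lam"
  have Imz0: "Im z0 = of_int \<sigma> * lam" by (simp add: z0_def)
  have absIm: "\<bar>Im z0\<bar> = lam" using \<sigma> lam_pos by (auto simp: Imz0)
  have z0U: "z0 \<in> U" using U_strip absIm by (auto simp: closed_strip_def)
  have z0_notin: "z0 \<notin> open_strip lam" using absIm by (simp add: open_strip_def)
  define p where "p = (\<lambda>s::real. z0 - \<i> * of_int \<sigma> * of_real s)"
  have p_strip: "p s \<in> open_strip lam" if "0 < s" "s < 2 * lam" for s
    using \<sigma> that by (auto simp: p_def open_strip_def Imz0)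
  have p_dist: "dist (p s) z0 = \<bar>s\<bar>" for s
    using \<sigma> by (auto simp: p_def dist_norm norm_mult)
  have p_ne: "p s \<noteq> z0" if "s \<noteq> 0" for s
    using \<sigma> that by (auto simp: p_def)
  have iso: "isolated_singularity_at h z0"
    using h_holo z0U U_open
    by (intro isolated_singularity_at_holomorphic[of h U]) (auto intro: holomorphic_on_subset)
  have ness: "not_essential h z0" using not_essential_holomorphic[OF h_holo z0U U_open] .
  have freq: "\<exists>\<^sub>F w in at z0. h w \<noteq> 0"
    unfolding frequently_def
  proof
    assume "\<forall>\<^sub>F w in at z0. \<not> h w \<noteq> 0"
    then obtain d where d: "d > 0" "\<And>x. x \<noteq> z0 \<and> dist x z0 < d \<Longrightarrow> h x = 0"
      unfolding eventually_at by auto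
    define s where "s = min d lam / 2"
    have s: "0 < s" "s < 2 * lam" "s < d" using d lam_pos by (auto simp: s_def)
    have "h (p s) = 0" using d(2)[of "p s"] p_ne[of s] p_dist[of s] s by auto
    moreover have "h (p s) \<noteq> 0" using h_nonzero p_strip[OF s(1,2)] by auto
    ultimately show False by simp
  qed
  obtain r0 g where r0: "r0 > 0" and g_hol: "g holomorphic_on cball z0 r0" and gz0: "g z0 \<noteq> 0"
    and fac: "\<And>w. w \<in> cball z0 r0 - {z0} \<Longrightarrow> h w = g w * (w - z0) ^ k \<and> g w \<noteq> 0"
    using zorder_exist[OF iso ness freq] ord unfolding z0_def[symmetric] by auto
  define c0 where "c0 = \<i> * (of_int \<sigma> :: complex)"
  have c0: "c0 \<noteq> 0" using \<sigma> by (auto simp: c0_def)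
  define Ef where "Ef = (\<lambda>u. if u = 0 then 1 else (1 - exp (- (c0 * u))) / (c0 * u))"
  have EfP1: "Ef holomorphic_on UNIV" unfolding Ef_def by (rule Ef_props(1)[OF c0])
  have EfP2: "1 - exp (- (c0 * u)) = c0 * u * Ef u" for u unfolding Ef_def by (rule Ef_props(2)[OF c0])
  have EfP3: "\<exists>r>0. \<forall>u. norm u < r \<longrightarrow> Ef u \<noteq> 0" unfolding Ef_def by (rule Ef_props(3)[OF c0])
  obtain r2 where r2: "r2 > 0" "\<And>u. norm u < r2 \<Longrightarrow> Ef u \<noteq> 0" using EfP3 by blast
  define r where "r = min (min r0 r2) pi"
  have r: "r > 0" "r \<le> pi" "r \<le> r0" "r \<le> r2" using r0 r2 by (auto simp: r_def)
  define B where "B = ball z0 r"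
  have Bsub: "B \<subseteq> cball z0 r0" using r by (auto simp: B_def)
  define q where "q = (\<lambda>w. g w / (c0 ^ k * Ef (w - z0) ^ k))"
  have Ef_nz: "Ef (w - z0) \<noteq> 0" if "w \<in> B" for w
    using r2(2)[of "w - z0"] that r by (auto simp: B_def dist_norm norm_minus_commute)
  have g_nz: "g w \<noteq> 0" if "w \<in> B" for w
    using fac[of w] gz0 that Bsub by (cases "w = z0") auto
  have q_hol: "q holomorphic_on B"
  proof -
    have "g holomorphic_on B" using g_hol Bsub by (rule holomorphic_on_subset)
    moreover have "(\<lambda>w. Ef (w - z0)) holomorphic_on B"
    proof -
      have "(\<lambda>w. w - z0) holomorphic_on B" by (intro holomorphic_intros)
      moreover have "Ef holomorphic_on (\<lambda>w. w - z0) ` B" using EfP1 by (rule holomorphic_on_subset) simp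
      ultimately show ?thesis using holomorphic_on_compose[of "\<lambda>w. w - z0" B Ef] by (simp add: o_def)
    qed
    ultimately show ?thesis unfolding q_def using Ef_nz c0
      by (intro holomorphic_intros) auto
  qed
  have q_nz: "q w \<noteq> 0" if "w \<in> B" for w
    using g_nz[OF that] Ef_nz[OF that] c0 by (simp add: q_def)
  obtain G where G_hol: "G holomorphic_on B" and G_exp: "\<And>w. w \<in> B \<Longrightarrow> exp (G w) = q w"
    using holomorphic_logarithm_exists[of B q z0] q_hol q_nz r by (auto simp: B_def)
  define Ft where "Ft = (\<lambda>w. Ln (1 - exp (- (\<i> * of_int \<sigma> * (w - z0)))))"
  have Re_strip: "Re (1 - exp (- (\<i> * of_int \<sigma> * (w - z0)))) > 0" if "w \<in> open_strip lam" for w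
    using Re_pos_strip[OF \<sigma>, of w lam t0] that by (simp add: open_strip_def z0_def)
  have Ft_cont: "continuous_on (open_strip lam) Ft"
  proof -
    have "Ft holomorphic_on open_strip lam" unfolding Ft_def
    proof (rule holomorphic_on_Ln')
      fix w assume "w \<in> open_strip lam"
      then show "1 - exp (- (\<i> * of_int \<sigma> * (w - z0))) \<notin> \<real>\<^sub>\<le>\<^sub>0"
        using Re_strip[of w] unfolding complex_nonpos_Reals_iff by linarith
    next
      show "(\<lambda>w. 1 - exp (- (\<i> * of_int \<sigma> * (w - z0)))) holomorphic_on open_strip lam"
        by (intro holomorphic_intros)
    qed
    then show ?thesis by (rule holomorphic_on_imp_continuous_on)
  qed
  define D where "D = B \<inter> open_strip lam"
  have convD: "convex D"
  proof -
    have "convex (open_strip lam)"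
      unfolding open_strip_def convex_def
      by (auto simp: abs_less_iff intro: conv_lt)
         (use conv_lt[of "- Im _" lam "- Im _"] in fastforce)
    then show ?thesis unfolding D_def B_def by (intro convex_Int convex_ball)
  qed
  have exp_rel: "exp (L w) = exp (of_nat k * Ft w + G w)" if "w \<in> D" for w
  proof -
    have wB: "w \<in> B" and ws: "w \<in> open_strip lam" using that by (auto simp: D_def)
    have wz: "w \<noteq> z0" using ws z0_notin by auto
    have hw: "h w = g w * (w - z0) ^ k" using fac[of w] wB Bsub wz by auto
    have nz: "1 - exp (- (\<i> * of_int \<sigma> * (w - z0))) \<noteq> 0" using Re_strip[OF ws] by auto
    have "exp (of_nat k * Ft w) = (1 - exp (- (\<i> * of_int \<sigma> * (w - z0)))) ^ k"
      unfolding Ft_def exp_of_nat_mult using nz by simp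
    also have "\<dots> = (c0 * (w - z0) * Ef (w - z0)) ^ k"
      using EfP2[of "w - z0"] by (simp add: c0_def)
    finally have e1: "exp (of_nat k * Ft w) = (c0 * (w - z0) * Ef (w - z0)) ^ k" .
    have "exp (of_nat k * Ft w + G w) = (c0 * (w - z0) * Ef (w - z0)) ^ k * q w"
      by (simp add: exp_add e1 G_exp[OF wB])
    also have "\<dots> = g w * (w - z0) ^ k"
      using Ef_nz[OF wB] c0 by (simp add: q_def power_mult_distrib)
    also have "\<dots> = exp (L w)" using hw L_log ws by auto
    finally show ?thesis by simp
  qed
  define \<Delta> where "\<Delta> = (\<lambda>w. L w - of_nat k * Ft w - G w)"
  have \<Delta>_cont: "continuous_on D \<Delta>"
  proof -
    have "continuous_on D L" using L_cont by (rule continuous_on_subset) (auto simp: D_def)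
    moreover have "continuous_on D Ft" using Ft_cont by (rule continuous_on_subset) (auto simp: D_def)
    moreover have "continuous_on D G"
      using holomorphic_on_imp_continuous_on[OF G_hol] by (rule continuous_on_subset) (auto simp: D_def)
    ultimately show ?thesis unfolding \<Delta>_def by (intro continuous_intros)
  qed
  have \<Delta>_exp: "exp (\<Delta> w) = 1" if "w \<in> D" for w
    using exp_rel[OF that] by (simp add: \<Delta>_def exp_diff exp_add)
  have "\<Delta> constant_on D"
  proof (rule continuous_discrete_range_constant[OF convex_connected[OF convD] \<Delta>_cont])
    fix x assume x: "x \<in> D"
    show "\<exists>e>0. \<forall>y. y \<in> D \<and> \<Delta> y \<noteq> \<Delta> x \<longrightarrow> e \<le> norm (\<Delta> y - \<Delta> x)"
    proof (intro exI[of _ "2 * pi"] conjI allI impI)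
      fix y assume y: "y \<in> D \<and> \<Delta> y \<noteq> \<Delta> x"
      have "exp (\<Delta> y) = exp (\<Delta> x)" using \<Delta>_exp x y by simp
      then obtain m :: int where m: "\<Delta> y = \<Delta> x + complex_of_real (real_of_int (2 * m) * pi) * \<i>"
        unfolding exp_eq by blast
      have "m \<noteq> 0" using m y by auto
      then have "1 \<le> \<bar>real_of_int m\<bar>" by linarith
      have "norm (\<Delta> y - \<Delta> x) = 2 * pi * \<bar>real_of_int m\<bar>"
        using m by (simp add: norm_mult abs_mult)
      also have "\<dots> \<ge> 2 * pi * 1" using \<open>1 \<le> \<bar>real_of_int m\<bar>\<close> by (intro mult_left_mono) auto
      finally show "2 * pi \<le> norm (\<Delta> y - \<Delta> x)" by simp
    qed simp
  qed
  then obtain c where c: "\<And>w. w \<in> D \<Longrightarrow> \<Delta> w = c" unfolding constant_on_def by blast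
  have bnd: "L (of_real t + \<i> * of_int \<sigma> * of_real lam) =
        of_nat k * Ln (1 - exp (- (\<i> * of_int \<sigma> * (of_real t - of_real t0))))
          + G (of_real t + \<i> * of_int \<sigma> * of_real lam) + c"
    if t: "0 < \<bar>t - t0\<bar>" "\<bar>t - t0\<bar> < r" for t
  proof -
    define z where "z = of_real t + \<i> * of_int \<sigma> * of_real lam"
    have zz0: "z - z0 = of_real t - of_real t0" by (simp add: z_def z0_def)
    have dz: "dist z z0 = \<bar>t - t0\<bar>" by (simp add: dist_norm zz0 flip: of_real_diff)
    have zB: "z \<in> B" using dz t by (simp add: B_def dist_commute)
    have zne: "z \<noteq> z0" using dz t by auto
    have Imz: "\<bar>Im z\<bar> = lam" using \<sigma> lam_pos by (auto simp: z_def)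
    have hz: "h z \<noteq> 0" using fac[of z] zB Bsub zne by auto
    have limL: "(L \<longlongrightarrow> L z) (at z within open_strip lam)" using L_boundary Imz hz by blast
    define R where "R = (\<lambda>w. of_nat k * Ft w + G w + c)"
    have ReFt: "Re (1 - exp (- (\<i> * of_int \<sigma> * (z - z0)))) > 0"
    proof -
      have "Re (exp (- (\<i> * of_int \<sigma> * (z - z0)))) = cos (of_int \<sigma> * (t - t0))"
        by (simp add: zz0 Re_exp)
      also have "\<dots> = cos (t - t0)" using \<sigma> cos_minus[of "t - t0"] by auto
      also have "\<dots> < 1" using cos_lt_1[of "t - t0"] t r by auto
      finally show ?thesis by simp
    qed
    have cFt: "isCont Ft z"
      unfolding Ft_def
      by (rule continuous_at_compose[unfolded o_def, OF _ continuous_at_Ln])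
         (use ReFt in \<open>auto intro!: continuous_intros simp: complex_nonpos_Reals_iff\<close>)
    have cG: "isCont G z"
      using holomorphic_on_imp_continuous_on[OF G_hol] zB
      by (simp add: B_def continuous_on_eq_continuous_at)
    have cR: "isCont R z" unfolding R_def by (intro continuous_intros cFt cG)
    then have limR: "(R \<longlongrightarrow> R z) (at z within open_strip lam)"
      using continuous_at_imp_continuous_within continuous_within by blast
    have ev: "\<forall>\<^sub>F w in at z within open_strip lam. R w = L w"
    proof -
      have "open B" by (simp add: B_def)
      then obtain e where e: "e > 0" "ball z e \<subseteq> B" using zB openE by blast
      show ?thesis unfolding eventually_at
      proof (intro exI[of _ e] conjI ballI impI)
        fix w assume w: "w \<in> open_strip lam" "w \<noteq> z \<and> dist w z < e"
        then have "w \<in> D" using e by (auto simp: D_def dist_commute)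
        then have "\<Delta> w = c" by (rule c)
        then show "R w = L w" by (simp add: R_def \<Delta>_def algebra_simps)
      qed (use e in auto)
    qed
    have limL2: "(L \<longlongrightarrow> R z) (at z within open_strip lam)"
      using tendsto_cong[OF ev] limR by simp
    have nt: "at z within open_strip lam \<noteq> bot"
    proof -
      have "z islimpt open_strip lam"
        unfolding islimpt_approachable
      proof (intro allI impI)
        fix e :: real assume e: "e > 0"
        define s where "s = min e lam / 2"
        have s: "0 < s" "s < 2 * lam" "s < e" using e lam_pos by (auto simp: s_def)
        define w where "w = z - \<i> * of_int \<sigma> * of_real s"
        have "w \<in> open_strip lam" using \<sigma> s by (auto simp: w_def z_def open_strip_def)
        moreover have "w \<noteq> z" using \<sigma> s by (auto simp: w_def)
        moreover have "dist w z < e" using \<sigma> s by (auto simp: w_def dist_norm norm_mult)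
        ultimately show "\<exists>x'\<in>open_strip lam. x' \<noteq> z \<and> dist x' z < e" by blast
      qed
      then show ?thesis using trivial_limit_within by blast
    qed
    have "L z = R z" using tendsto_unique[OF nt limL limL2] .
    then have "L z = of_nat k * Ln (1 - exp (- (\<i> * of_int \<sigma> * (z - z0)))) + G z + c"
      by (simp only: R_def Ft_def)
    then have "L z = of_nat k * Ln (1 - exp (- (\<i> * of_int \<sigma> * (of_real t - of_real t0)))) + G z + c"
      unfolding zz0 .
    then show ?thesis unfolding z_def .
  qed
  show ?thesis
    using r G_hol bnd unfolding B_def z0_def by blast
qed



lemma vd_zero:
  assumes "d > 0" "\<And>s. dist s t < d \<Longrightarrow> f s = 0"
  shows "vector_derivative f (at t) = 0"
proof -
  have "((\<lambda>s. 0) has_vector_derivative 0) (at t)" by (rule has_vector_derivative_const)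
  then have "(f has_vector_derivative 0) (at t)"
    by (rule has_vector_derivative_transform_within_open[of _ _ _ "ball t d"])
       (use assms in \<open>auto simp: dist_commute\<close>)
  then show ?thesis by (rule vector_derivative_at)
qed

lemma vd_periodic:
  fixes f :: "real \<Rightarrow> complex"
  assumes per: "\<And>s. f (s + p) = f s" and D: "(f has_vector_derivative D) (at (a + p))"
  shows "vector_derivative f (at a) = D"
proof -
  have "((\<lambda>s. s + p) has_vector_derivative 1) (at a)"
    by (auto intro!: derivative_eq_intros)
  from vector_diff_chain_at[OF this, of f D] D
  have "((f \<circ> (\<lambda>s. s + p)) has_vector_derivative D) (at a)" by simp
  moreover have "f \<circ> (\<lambda>s. s + p) = f" using per by (simp add: o_def)
  ultimately show ?thesis using vector_derivative_at by fastforce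
qed

lemma C2_isCont:
  assumes "C2_at f t" shows "isCont f t"
  using C2_global(1)[OF assms] has_vector_derivative_continuous by blast

lemma C2_Fr:
  fixes \<sigma> :: int
  assumes \<sigma>: "\<sigma> = 1 \<or> \<sigma> = -1" and t: "0 < \<bar>t - t0\<bar>" "\<bar>t - t0\<bar> \<le> pi"
  shows "C2_at (\<lambda>s. Ln (1 - exp (- (\<i> * of_int \<sigma> * (complex_of_real s - complex_of_real t0))))) t"
proof -
  define f where "f = (\<lambda>w. Ln (1 - exp (- (\<i> * of_int \<sigma> * (w - complex_of_real t0)))))"
  define W where "W = {w. (\<lambda>w. 0) w < (\<lambda>w. Re (1 - exp (- (\<i> * of_int \<sigma> * (w - complex_of_real t0))))) w}"
  have oW: "open W" unfolding W_def by (intro open_Collect_less continuous_intros)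
  have hW: "f holomorphic_on W"
    unfolding f_def
  proof (rule holomorphic_on_Ln')
    fix w assume "w \<in> W"
    then show "1 - exp (- (\<i> * of_int \<sigma> * (w - complex_of_real t0))) \<notin> \<real>\<^sub>\<le>\<^sub>0"
      unfolding W_def complex_nonpos_Reals_iff by auto
  qed (intro holomorphic_intros)
  have "Re (exp (- (\<i> * of_int \<sigma> * (complex_of_real t - complex_of_real t0)))) = cos (of_int \<sigma> * (t - t0))"
    by (simp add: Re_exp)
  also have "\<dots> = cos (t - t0)" using \<sigma> cos_minus[of "t - t0"] by auto
  also have "\<dots> < 1" using cos_lt_1[of "t - t0"] t by auto
  finally have "of_real t + 0 \<in> W" by (simp add: W_def)
  from C2_at_hol[OF hW oW this] show ?thesis by (simp add: f_def)
qed



lemma supp_lemma: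
  fixes chi :: "real \<Rightarrow> real"
  assumes eps: "0 < \<epsilon>" "\<epsilon> \<le> pi / 2"
    and supp: "\<forall>t. chi t \<noteq> 0 \<longrightarrow> (\<exists>m::int. \<bar>t - t0 - 2 * pi * real_of_int m\<bar> < \<epsilon>)"
    and t: "\<bar>t - t0\<bar> \<le> 5 * pi / 4" and nz: "chi t \<noteq> 0"
  shows "\<bar>t - t0\<bar> < \<epsilon>"
proof -
  obtain m :: int where m: "\<bar>t - t0 - 2 * pi * real_of_int m\<bar> < \<epsilon>" using supp nz by blast
  show ?thesis
  proof (cases "m = 0")
    case True then show ?thesis using m by simp
  next
    case False
    then have "1 \<le> \<bar>real_of_int m\<bar>" by linarith
    then have "2 * pi \<le> 2 * pi * \<bar>real_of_int m\<bar>" by simp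
    also have "\<dots> = \<bar>2 * pi * real_of_int m\<bar>" by (simp add: abs_mult)
    finally have "2 * pi \<le> \<bar>2 * pi * real_of_int m\<bar>" .
    then have False using m t eps by linarith
    then show ?thesis ..
  qed
qed

lemma main_side:
  fixes \<sigma> :: int and lam t0 :: real and h L :: "complex \<Rightarrow> complex" and k :: nat
  assumes \<sigma>: "\<sigma> = 1 \<or> \<sigma> = -1" and lam_pos: "lam > 0" and U_open: "open U"
    and U_strip: "closed_strip lam \<subseteq> U"
    and h_holo: "h holomorphic_on U" and h_nonzero: "\<forall>z\<in>open_strip lam. h z \<noteq> 0"
    and L_cont: "continuous_on (open_strip lam) L" and L_log: "\<forall>z\<in>open_strip lam. exp (L z) = h z"
    and L_boundary: "\<forall>z. \<bar>Im z\<bar> = lam \<and> h z \<noteq> 0 \<longrightarrow> (L \<longlongrightarrow> L z) (at z within open_strip lam)"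
    and ord: "zorder h (of_real t0 + \<i> * of_int \<sigma> * of_real lam) = int k"
  shows "\<exists>\<epsilon>>0. \<forall>chi::real \<Rightarrow> real.
        smooth_real chi \<and> (\<forall>t. chi (t + 2 * pi) = chi t) \<and>
        (\<forall>t. chi t \<noteq> 0 \<longrightarrow> (\<exists>m::int. \<bar>t - t0 - 2 * pi * real_of_int m\<bar> < \<epsilon>)) \<and>
        (\<exists>\<eta>>0. \<forall>t. \<bar>t - t0\<bar> < \<eta> \<longrightarrow> chi t = 1) \<longrightarrow>
        (\<exists>C. \<forall>n::int. \<sigma> * n > 0 \<longrightarrow>
          norm (integral {t0 - pi..t0 + pi}
             (\<lambda>t. complex_of_real (chi t) * L (complex_of_real t + \<i> * of_int \<sigma> * complex_of_real lam)
                   * exp (\<i> * of_int n * complex_of_real t))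
           - ( - complex_of_real (2 * pi * real k / real_of_int \<bar>n\<bar>)
                 * exp (\<i> * of_int n * complex_of_real t0))) \<le> C / (real_of_int n)^2)"
proof -
  obtain r G c where r: "r > 0" "r \<le> pi"
    and G_hol: "G holomorphic_on ball (of_real t0 + \<i> * of_int \<sigma> * of_real lam) r"
    and rep: "\<And>t. 0 < \<bar>t - t0\<bar> \<Longrightarrow> \<bar>t - t0\<bar> < r \<Longrightarrow> L (of_real t + \<i> * of_int \<sigma> * of_real lam) =
        of_nat k * Ln (1 - exp (- (\<i> * of_int \<sigma> * (of_real t - of_real t0))))
          + G (of_real t + \<i> * of_int \<sigma> * of_real lam) + c"
    using local_rep[OF assms] by blast
  define \<epsilon> where "\<epsilon> = r / 2"
  have eps: "0 < \<epsilon>" "\<epsilon> \<le> pi / 2" "\<epsilon> < r" using r by (auto simp: \<epsilon>_def)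
  show ?thesis
  proof (rule exI[of _ \<epsilon>], intro conjI allI impI)
    show "0 < \<epsilon>" using eps by simp
    fix chi :: "real \<Rightarrow> real"
    assume A: "smooth_real chi \<and> (\<forall>t. chi (t + 2 * pi) = chi t) \<and>
        (\<forall>t. chi t \<noteq> 0 \<longrightarrow> (\<exists>m::int. \<bar>t - t0 - 2 * pi * real_of_int m\<bar> < \<epsilon>)) \<and>
        (\<exists>\<eta>>0. \<forall>t. \<bar>t - t0\<bar> < \<eta> \<longrightarrow> chi t = 1)"
    then have sm: "smooth_real chi" and per: "\<And>t. chi (t + 2 * pi) = chi t"
      and supp: "\<forall>t. chi t \<noteq> 0 \<longrightarrow> (\<exists>m::int. \<bar>t - t0 - 2 * pi * real_of_int m\<bar> < \<epsilon>)"
      by auto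
    obtain \<eta> where eta: "\<eta> > 0" "\<And>t. \<bar>t - t0\<bar> < \<eta> \<Longrightarrow> chi t = 1" using A by blast
    have chi0: "chi t = 0" if "\<bar>t - t0\<bar> \<le> 5 * pi / 4" "\<epsilon> \<le> \<bar>t - t0\<bar>" for t
      using supp_lemma[OF eps(1,2) supp that(1)] that(2) by fastforce
    define a where "a = t0 - pi"
    define b where "b = t0 + pi"
    have ab: "b = a + 2 * pi" by (simp add: a_def b_def)
    define P where "P = (\<lambda>t. complex_of_real t + \<i> * of_int \<sigma> * complex_of_real lam)"
    define Fr where "Fr = (\<lambda>t. Ln (1 - exp (- (\<i> * of_int \<sigma> * (complex_of_real t - complex_of_real t0)))))"
    define \<Psi>1 where "\<Psi>1 = (\<lambda>t. complex_of_real (chi t) * (G (P t) + c))"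
    define \<Psi>2 where "\<Psi>2 = (\<lambda>t. (1 - complex_of_real (chi t)) * Fr t)"
    have \<Psi>1_zero: "\<exists>d>0. \<forall>s. dist s t < d \<longrightarrow> \<Psi>1 s = 0"
      if "t \<in> {a..b}" "r \<le> \<bar>t - t0\<bar>" for t
    proof (intro exI[of _ "min (pi / 4) (r - \<epsilon>)"] conjI allI impI)
      show "0 < min (pi / 4) (r - \<epsilon>)" using eps by simp
      fix s assume s: "dist s t < min (pi / 4) (r - \<epsilon>)"
      have s1: "\<bar>s - t\<bar> < pi / 4" "\<bar>s - t\<bar> < r - \<epsilon>" using s by (auto simp: dist_real_def)
      have tri: "\<bar>s - t0\<bar> \<le> \<bar>s - t\<bar> + \<bar>t - t0\<bar>" "\<bar>t - t0\<bar> \<le> \<bar>t - s\<bar> + \<bar>s - t0\<bar>"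
        using abs_triangle_ineq[of "s - t" "t - t0"] abs_triangle_ineq[of "t - s" "s - t0"] by simp_all
      have tpi: "\<bar>t - t0\<bar> \<le> pi" using that by (auto simp: a_def b_def)
      have "\<bar>t - s\<bar> = \<bar>s - t\<bar>" by (rule abs_minus_commute)
      then have "\<bar>s - t0\<bar> \<le> 5 * pi / 4" "\<epsilon> \<le> \<bar>s - t0\<bar>" using s1 tri tpi that(2) by linarith+
      then show "\<Psi>1 s = 0" using chi0 by (simp add: \<Psi>1_def)
    qed
    have C2_1: "C2_at \<Psi>1 t" if t: "t \<in> {a..b}" for t
    proof (cases "\<bar>t - t0\<bar> < r")
      case True
      have inB: "complex_of_real t + \<i> * of_int \<sigma> * complex_of_real lam \<in> ball (of_real t0 + \<i> * of_int \<sigma> * of_real lam) r"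
        using True by (simp add: dist_norm flip: of_real_diff)
      have "C2_at (\<lambda>s. G (complex_of_real s + \<i> * of_int \<sigma> * complex_of_real lam)) t"
        by (rule C2_at_hol[OF G_hol _ inB]) simp
      then have "C2_at (\<lambda>s. complex_of_real (chi s) * (G (P s) + c)) t"
        unfolding P_def by (intro C2_at_mult C2_at_smooth[OF sm] C2_at_add C2_at_const)
      then show ?thesis by (simp add: \<Psi>1_def)
    next
      case False
      then obtain d where d: "d > 0" "\<And>s. dist s t < d \<Longrightarrow> \<Psi>1 s = 0" using \<Psi>1_zero[OF t] by auto
      show ?thesis by (rule C2_at_transform[OF C2_at_const d(1)]) (use d in auto)
    qed
    have C2_2: "C2_at \<Psi>2 t" if t: "t \<in> {a..b}" for t
    proof (cases "\<bar>t - t0\<bar> < \<eta>")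
      case True
      show ?thesis
      proof (rule C2_at_transform[OF C2_at_const, of "\<eta> - \<bar>t - t0\<bar>"])
        show "0 < \<eta> - \<bar>t - t0\<bar>" using True by simp
        fix s assume "dist s t < \<eta> - \<bar>t - t0\<bar>"
        then have "\<bar>s - t0\<bar> < \<eta>" by (auto simp: dist_real_def)
        then show "\<Psi>2 s = 0" using eta by (simp add: \<Psi>2_def)
      qed
    next
      case False
      then have tt: "0 < \<bar>t - t0\<bar>" "\<bar>t - t0\<bar> \<le> pi" using eta t by (auto simp: a_def b_def)
      have "C2_at (\<lambda>s. (1 - complex_of_real (chi s)) * Fr s) t"
        unfolding Fr_def
        by (intro C2_at_mult C2_at_diff C2_at_const C2_at_smooth[OF sm] C2_Fr[OF \<sigma> tt])
      then show ?thesis by (simp add: \<Psi>2_def)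
    qed
    have aab: "a \<in> {a..b}" "b \<in> {a..b}" "r \<le> \<bar>a - t0\<bar>" "r \<le> \<bar>b - t0\<bar>"
      using r by (auto simp: a_def b_def)
    obtain da where da: "da > 0" "\<And>s. dist s a < da \<Longrightarrow> \<Psi>1 s = 0" using \<Psi>1_zero[OF aab(1,3)] by auto
    obtain db where db: "db > 0" "\<And>s. dist s b < db \<Longrightarrow> \<Psi>1 s = 0" using \<Psi>1_zero[OF aab(2,4)] by auto
    have p10: "\<Psi>1 a = \<Psi>1 (a + 2 * pi)" using da(2)[of a] db(2)[of b] da(1) db(1) ab by simp
    have p11: "vector_derivative \<Psi>1 (at a) = vector_derivative \<Psi>1 (at (a + 2 * pi))"
      using vd_zero[OF da] vd_zero[OF db] ab by simp
    have Fr_per: "Fr (s + 2 * pi) = Fr s" for s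
    proof -
      have "- (\<i> * of_int \<sigma> * (complex_of_real (s + 2 * pi) - complex_of_real t0)) =
          - (\<i> * of_int \<sigma> * (complex_of_real s - complex_of_real t0)) + \<i> * (of_int (- \<sigma>) * (of_real pi * 2))"
        by (simp add: algebra_simps)
      then have "exp (- (\<i> * of_int \<sigma> * (complex_of_real (s + 2 * pi) - complex_of_real t0))) =
          exp (- (\<i> * of_int \<sigma> * (complex_of_real s - complex_of_real t0)))"
        by (simp only: exp_plus_2pin)
      then show ?thesis by (simp add: Fr_def)
    qed
    have \<Psi>2_per: "\<Psi>2 (s + 2 * pi) = \<Psi>2 s" for s by (simp add: \<Psi>2_def Fr_per per)
    have p20: "\<Psi>2 a = \<Psi>2 (a + 2 * pi)" using \<Psi>2_per by simp
    have p21: "vector_derivative \<Psi>2 (at a) = vector_derivative \<Psi>2 (at (a + 2 * pi))"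
      by (rule vd_periodic[where f = \<Psi>2 and p = "2 * pi", OF \<Psi>2_per]) (use C2_global(1)[OF C2_2[OF aab(2)]] ab in simp)
    obtain C1 where C1: "\<And>n::int. n \<noteq> 0 \<Longrightarrow>
        norm (integral {a..a + 2*pi} (\<lambda>t. \<Psi>1 t * exp (\<i> * of_int n * of_real t))) \<le> C1 / (of_int n)^2"
      using fourier_C2[of a \<Psi>1] C2_1 p10 p11 ab by auto
    obtain C2 where C2: "\<And>n::int. n \<noteq> 0 \<Longrightarrow>
        norm (integral {a..a + 2*pi} (\<lambda>t. \<Psi>2 t * exp (\<i> * of_int n * of_real t))) \<le> C2 / (of_int n)^2"
      using fourier_C2[of a \<Psi>2] C2_2 p20 p21 ab by auto
    show "\<exists>C. \<forall>n::int. \<sigma> * n > 0 \<longrightarrow>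
          norm (integral {t0 - pi..t0 + pi}
             (\<lambda>t. complex_of_real (chi t) * L (complex_of_real t + \<i> * of_int \<sigma> * complex_of_real lam)
                   * exp (\<i> * of_int n * complex_of_real t))
           - ( - complex_of_real (2 * pi * real k / real_of_int \<bar>n\<bar>)
                 * exp (\<i> * of_int n * complex_of_real t0))) \<le> C / (real_of_int n)^2"
    proof (intro exI[of _ "C1 + real k * C2"] allI impI)
      fix n :: int assume n: "\<sigma> * n > 0"
      have n0: "n \<noteq> 0" using n by auto
      define E where "E = (\<lambda>t. exp (\<i> * of_int n * complex_of_real t))"
      have cE: "continuous_on {a..b} E" unfolding E_def by (intro continuous_intros)
      have c1: "continuous_on {a..b} \<Psi>1"
        using C2_1 C2_isCont by (intro continuous_at_imp_continuous_on) blast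
      have c2: "continuous_on {a..b} \<Psi>2"
        using C2_2 C2_isCont by (intro continuous_at_imp_continuous_on) blast
      define I1 where "I1 = integral {a..b} (\<lambda>t. \<Psi>1 t * E t)"
      define I2 where "I2 = integral {a..b} (\<lambda>t. \<Psi>2 t * E t)"
      have hI1: "((\<lambda>t. \<Psi>1 t * E t) has_integral I1) {a..b}" unfolding I1_def
        by (intro integrable_integral integrable_continuous_interval continuous_on_mult c1 cE)
      have hI2: "((\<lambda>t. \<Psi>2 t * E t) has_integral I2) {a..b}" unfolding I2_def
        by (intro integrable_integral integrable_continuous_interval continuous_on_mult c2 cE)
      have hS: "((\<lambda>t. Fr t * E t) has_integral (- complex_of_real (2 * pi / real_of_int \<bar>n\<bar>) * E t0)) {a..b}"
        using sing_integral[OF \<sigma> n, of t0] unfolding Fr_def E_def a_def b_def .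
      define J where "J = of_nat k * (- complex_of_real (2 * pi / real_of_int \<bar>n\<bar>) * E t0) + I1 - of_nat k * I2"
      have hsum: "((\<lambda>t. of_nat k * (Fr t * E t) + \<Psi>1 t * E t - of_nat k * (\<Psi>2 t * E t)) has_integral J) {a..b}"
        unfolding J_def
        by (intro has_integral_diff has_integral_add has_integral_mult_right hS hI1 hI2)
      have pw: "complex_of_real (chi t) * L (P t) * E t =
          of_nat k * (Fr t * E t) + \<Psi>1 t * E t - of_nat k * (\<Psi>2 t * E t)"
        if t: "t \<in> {a..b} - {t0}" for t
      proof (cases "chi t = 0")
        case True
        then show ?thesis by (simp add: \<Psi>1_def \<Psi>2_def algebra_simps)
      next
        case False
        have "\<bar>t - t0\<bar> \<le> pi" using t by (auto simp: a_def b_def)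
        then have "\<bar>t - t0\<bar> \<le> 5 * pi / 4" using pi_gt_zero by linarith
        then have "\<bar>t - t0\<bar> < \<epsilon>"
          using supp_lemma[OF eps(1,2) supp _ False] by blast
        then have "L (P t) = of_nat k * Fr t + G (P t) + c"
          using rep[of t] t eps by (auto simp: P_def Fr_def)
        then show ?thesis by (simp add: \<Psi>1_def \<Psi>2_def algebra_simps)
      qed
      have hL: "((\<lambda>t. complex_of_real (chi t) * L (P t) * E t) has_integral J) {a..b}"
        by (rule has_integral_spike_finite[of "{t0}", OF _ _ hsum]) (use pw in auto)
      have intL: "integral {a..b} (\<lambda>t. complex_of_real (chi t) * L (P t) * E t) = J"
        using hL by (rule integral_unique)
      have tgt: "- complex_of_real (2 * pi * real k / real_of_int \<bar>n\<bar>) * E t0 =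
          of_nat k * (- complex_of_real (2 * pi / real_of_int \<bar>n\<bar>) * E t0)" by simp
      have diff: "J - (- complex_of_real (2 * pi * real k / real_of_int \<bar>n\<bar>) * E t0) = I1 - of_nat k * I2"
        unfolding tgt J_def by simp
      have b1: "norm I1 \<le> C1 / (real_of_int n)^2" using C1[OF n0] ab by (simp add: I1_def E_def)
      have b2: "norm I2 \<le> C2 / (real_of_int n)^2" using C2[OF n0] ab by (simp add: I2_def E_def)
      have "norm (I1 - of_nat k * I2) \<le> norm I1 + real k * norm I2"
        by (metis norm_triangle_ineq4 norm_mult norm_of_nat)
      also have "\<dots> \<le> C1 / (real_of_int n)^2 + real k * (C2 / (real_of_int n)^2)"
        using b1 b2 by (intro add_mono mult_left_mono) auto
      also have "\<dots> = (C1 + real k * C2) / (real_of_int n)^2" by (simp add: add_divide_distrib)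
      finally have "norm (I1 - of_nat k * I2) \<le> (C1 + real k * C2) / (real_of_int n)^2" .
      then show "norm (integral {t0 - pi..t0 + pi}
             (\<lambda>t. complex_of_real (chi t) * L (complex_of_real t + \<i> * of_int \<sigma> * complex_of_real lam)
                   * exp (\<i> * of_int n * complex_of_real t))
           - ( - complex_of_real (2 * pi * real k / real_of_int \<bar>n\<bar>)
                 * exp (\<i> * of_int n * complex_of_real t0))) \<le> (C1 + real k * C2) / (real_of_int n)^2"
        using intL diff by (simp add: P_def E_def a_def b_def)
    qed
  qed
qed



theorem lemmaB2:
  fixes lam :: real and h L :: "complex \<Rightarrow> complex" and U :: "complex set"
    and t0 :: real and k :: nat
  assumes lam_pos: "lam > 0"
    and U_open: "open U" and U_strip: "closed_strip lam \<subseteq> U"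
    and h_holo: "h holomorphic_on U"
    and h_periodic: "\<forall>z\<in>U. z + complex_of_real (2 * pi) \<in> U \<and> h (z + complex_of_real (2 * pi)) = h z"
    and h_nonzero: "\<forall>z\<in>open_strip lam. h z \<noteq> 0"
    and L_cont: "continuous_on (open_strip lam) L"
    and L_log: "\<forall>z\<in>open_strip lam. exp (L z) = h z"
    and L_boundary: "\<forall>z. \<bar>Im z\<bar> = lam \<and> h z \<noteq> 0 \<longrightarrow> (L \<longlongrightarrow> L z) (at z within open_strip lam)"
  shows
   "(h (complex_of_real t0 + \<i> * complex_of_real lam) = 0 \<and>
     zorder h (complex_of_real t0 + \<i> * complex_of_real lam) = int k \<longrightarrow>
     (\<exists>\<epsilon>>0. \<forall>(chi::real \<Rightarrow> real).
        smooth_real chi \<and> (\<forall>t. chi (t + 2 * pi) = chi t) \<and>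
        (\<forall>t. chi t \<noteq> 0 \<longrightarrow> (\<exists>m::int. \<bar>t - t0 - 2 * pi * real_of_int m\<bar> < \<epsilon>)) \<and>
        (\<exists>\<eta>>0. \<forall>t. \<bar>t - t0\<bar> < \<eta> \<longrightarrow> chi t = 1) \<longrightarrow>
        (\<lambda>n::int. integral {t0 - pi..t0 + pi}
             (\<lambda>t. complex_of_real (chi t) * L (complex_of_real t + \<i> * complex_of_real lam)
                   * exp (\<i> * of_int n * complex_of_real t))
           - ( - complex_of_real (2 * pi * real k / real_of_int \<bar>n\<bar>)
                 * exp (\<i> * of_int n * complex_of_real t0)))
        \<in> O[at_top](\<lambda>n. 1 / (of_int n)^2)))
    \<and>
    (h (complex_of_real t0 - \<i> * complex_of_real lam) = 0 \<and>
     zorder h (complex_of_real t0 - \<i> * complex_of_real lam) = int k \<longrightarrow>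
     (\<exists>\<epsilon>>0. \<forall>(chi::real \<Rightarrow> real).
        smooth_real chi \<and> (\<forall>t. chi (t + 2 * pi) = chi t) \<and>
        (\<forall>t. chi t \<noteq> 0 \<longrightarrow> (\<exists>m::int. \<bar>t - t0 - 2 * pi * real_of_int m\<bar> < \<epsilon>)) \<and>
        (\<exists>\<eta>>0. \<forall>t. \<bar>t - t0\<bar> < \<eta> \<longrightarrow> chi t = 1) \<longrightarrow>
        (\<lambda>n::int. integral {t0 - pi..t0 + pi}
             (\<lambda>t. complex_of_real (chi t) * L (complex_of_real t - \<i> * complex_of_real lam)
                   * exp (\<i> * of_int n * complex_of_real t))
           - ( - complex_of_real (2 * pi * real k / real_of_int \<bar>n\<bar>)
                 * exp (\<i> * of_int n * complex_of_real t0)))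
        \<in> O[at_bot](\<lambda>n. 1 / (of_int n)^2)))"
proof (intro conjI impI)
  have eq1: "\<And>t. complex_of_real t + \<i> * of_int 1 * complex_of_real lam = complex_of_real t + \<i> * complex_of_real lam"
    by simp
  have eq2: "\<And>t. complex_of_real t + \<i> * of_int (-1) * complex_of_real lam = complex_of_real t - \<i> * complex_of_real lam"
    by simp
  have nrm: "norm (1 / (of_int n)^2 :: complex) = 1 / (real_of_int n)^2" for n :: int
    by (simp add: norm_divide norm_power)
  assume H1: "h (complex_of_real t0 + \<i> * complex_of_real lam) = 0 \<and>
     zorder h (complex_of_real t0 + \<i> * complex_of_real lam) = int k"
  have ord1: "zorder h (of_real t0 + \<i> * of_int 1 * of_real lam) = int k" using H1 by simp
  from main_side[of 1, OF _ lam_pos U_open U_strip h_holo h_nonzero L_cont L_log L_boundary ord1]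
  obtain \<epsilon> where eps: "\<epsilon> > 0" and M: "\<And>chi::real \<Rightarrow> real.
        smooth_real chi \<and> (\<forall>t. chi (t + 2 * pi) = chi t) \<and>
        (\<forall>t. chi t \<noteq> 0 \<longrightarrow> (\<exists>m::int. \<bar>t - t0 - 2 * pi * real_of_int m\<bar> < \<epsilon>)) \<and>
        (\<exists>\<eta>>0. \<forall>t. \<bar>t - t0\<bar> < \<eta> \<longrightarrow> chi t = 1) \<Longrightarrow>
        (\<exists>C. \<forall>n::int. 1 * n > 0 \<longrightarrow>
          norm (integral {t0 - pi..t0 + pi}
             (\<lambda>t. complex_of_real (chi t) * L (complex_of_real t + \<i> * complex_of_real lam)
                   * exp (\<i> * of_int n * complex_of_real t))
           - ( - complex_of_real (2 * pi * real k / real_of_int \<bar>n\<bar>)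
                 * exp (\<i> * of_int n * complex_of_real t0))) \<le> C / (real_of_int n)^2)"
    unfolding eq1 by auto
  show "\<exists>\<epsilon>>0. \<forall>(chi::real \<Rightarrow> real).
        smooth_real chi \<and> (\<forall>t. chi (t + 2 * pi) = chi t) \<and>
        (\<forall>t. chi t \<noteq> 0 \<longrightarrow> (\<exists>m::int. \<bar>t - t0 - 2 * pi * real_of_int m\<bar> < \<epsilon>)) \<and>
        (\<exists>\<eta>>0. \<forall>t. \<bar>t - t0\<bar> < \<eta> \<longrightarrow> chi t = 1) \<longrightarrow>
        (\<lambda>n::int. integral {t0 - pi..t0 + pi}
             (\<lambda>t. complex_of_real (chi t) * L (complex_of_real t + \<i> * complex_of_real lam)
                   * exp (\<i> * of_int n * complex_of_real t))
           - ( - complex_of_real (2 * pi * real k / real_of_int \<bar>n\<bar>)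
                 * exp (\<i> * of_int n * complex_of_real t0)))
        \<in> O[at_top](\<lambda>n. 1 / (of_int n)^2)"
  proof (rule exI[of _ \<epsilon>], intro conjI allI impI)
    show "\<epsilon> > 0" by (rule eps)
    fix chi :: "real \<Rightarrow> real"
    assume A: "smooth_real chi \<and> (\<forall>t. chi (t + 2 * pi) = chi t) \<and>
        (\<forall>t. chi t \<noteq> 0 \<longrightarrow> (\<exists>m::int. \<bar>t - t0 - 2 * pi * real_of_int m\<bar> < \<epsilon>)) \<and>
        (\<exists>\<eta>>0. \<forall>t. \<bar>t - t0\<bar> < \<eta> \<longrightarrow> chi t = 1)"
    obtain C where C: "\<And>n::int. 1 * n > 0 \<Longrightarrow>
          norm (integral {t0 - pi..t0 + pi}
             (\<lambda>t. complex_of_real (chi t) * L (complex_of_real t + \<i> * complex_of_real lam)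
                   * exp (\<i> * of_int n * complex_of_real t))
           - ( - complex_of_real (2 * pi * real k / real_of_int \<bar>n\<bar>)
                 * exp (\<i> * of_int n * complex_of_real t0))) \<le> C / (real_of_int n)^2"
      using M[OF A] by blast
    show "(\<lambda>n::int. integral {t0 - pi..t0 + pi}
             (\<lambda>t. complex_of_real (chi t) * L (complex_of_real t + \<i> * complex_of_real lam)
                   * exp (\<i> * of_int n * complex_of_real t))
           - ( - complex_of_real (2 * pi * real k / real_of_int \<bar>n\<bar>)
                 * exp (\<i> * of_int n * complex_of_real t0)))
        \<in> O[at_top](\<lambda>n. 1 / (of_int n)^2)"
    proof (rule bigoI[where c = C])
      show "\<forall>\<^sub>F n in at_top. norm (integral {t0 - pi..t0 + pi}
             (\<lambda>t. complex_of_real (chi t) * L (complex_of_real t + \<i> * complex_of_real lam)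
                   * exp (\<i> * of_int n * complex_of_real t))
           - ( - complex_of_real (2 * pi * real k / real_of_int \<bar>n\<bar>)
                 * exp (\<i> * of_int n * complex_of_real t0))) \<le> C * norm (1 / (of_int n)^2 :: complex)"
        unfolding eventually_at_top_linorder
        by (rule exI[of _ 1]) (use C in \<open>auto simp: nrm\<close>)
    qed
  qed
next
  have eq2: "\<And>t. complex_of_real t + \<i> * of_int (-1) * complex_of_real lam = complex_of_real t - \<i> * complex_of_real lam"
    by simp
  have nrm: "norm (1 / (of_int n)^2 :: complex) = 1 / (real_of_int n)^2" for n :: int
    by (simp add: norm_divide norm_power)
  assume H1: "h (complex_of_real t0 - \<i> * complex_of_real lam) = 0 \<and>
     zorder h (complex_of_real t0 - \<i> * complex_of_real lam) = int k"
  have ord1: "zorder h (of_real t0 + \<i> * of_int (-1) * of_real lam) = int k" using H1 unfolding eq2 by simp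
  from main_side[of "-1", OF _ lam_pos U_open U_strip h_holo h_nonzero L_cont L_log L_boundary ord1]
  obtain \<epsilon> where eps: "\<epsilon> > 0" and M: "\<And>chi::real \<Rightarrow> real.
        smooth_real chi \<and> (\<forall>t. chi (t + 2 * pi) = chi t) \<and>
        (\<forall>t. chi t \<noteq> 0 \<longrightarrow> (\<exists>m::int. \<bar>t - t0 - 2 * pi * real_of_int m\<bar> < \<epsilon>)) \<and>
        (\<exists>\<eta>>0. \<forall>t. \<bar>t - t0\<bar> < \<eta> \<longrightarrow> chi t = 1) \<Longrightarrow>
        (\<exists>C. \<forall>n::int. (-1) * n > 0 \<longrightarrow>
          norm (integral {t0 - pi..t0 + pi}
             (\<lambda>t. complex_of_real (chi t) * L (complex_of_real t - \<i> * complex_of_real lam)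
                   * exp (\<i> * of_int n * complex_of_real t))
           - ( - complex_of_real (2 * pi * real k / real_of_int \<bar>n\<bar>)
                 * exp (\<i> * of_int n * complex_of_real t0))) \<le> C / (real_of_int n)^2)"
    unfolding eq2 by auto
  show "\<exists>\<epsilon>>0. \<forall>(chi::real \<Rightarrow> real).
        smooth_real chi \<and> (\<forall>t. chi (t + 2 * pi) = chi t) \<and>
        (\<forall>t. chi t \<noteq> 0 \<longrightarrow> (\<exists>m::int. \<bar>t - t0 - 2 * pi * real_of_int m\<bar> < \<epsilon>)) \<and>
        (\<exists>\<eta>>0. \<forall>t. \<bar>t - t0\<bar> < \<eta> \<longrightarrow> chi t = 1) \<longrightarrow>
        (\<lambda>n::int. integral {t0 - pi..t0 + pi}
             (\<lambda>t. complex_of_real (chi t) * L (complex_of_real t - \<i> * complex_of_real lam)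
                   * exp (\<i> * of_int n * complex_of_real t))
           - ( - complex_of_real (2 * pi * real k / real_of_int \<bar>n\<bar>)
                 * exp (\<i> * of_int n * complex_of_real t0)))
        \<in> O[at_bot](\<lambda>n. 1 / (of_int n)^2)"
  proof (rule exI[of _ \<epsilon>], intro conjI allI impI)
    show "\<epsilon> > 0" by (rule eps)
    fix chi :: "real \<Rightarrow> real"
    assume A: "smooth_real chi \<and> (\<forall>t. chi (t + 2 * pi) = chi t) \<and>
        (\<forall>t. chi t \<noteq> 0 \<longrightarrow> (\<exists>m::int. \<bar>t - t0 - 2 * pi * real_of_int m\<bar> < \<epsilon>)) \<and>
        (\<exists>\<eta>>0. \<forall>t. \<bar>t - t0\<bar> < \<eta> \<longrightarrow> chi t = 1)"
    obtain C where C: "\<And>n::int. (-1) * n > 0 \<Longrightarrow>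
          norm (integral {t0 - pi..t0 + pi}
             (\<lambda>t. complex_of_real (chi t) * L (complex_of_real t - \<i> * complex_of_real lam)
                   * exp (\<i> * of_int n * complex_of_real t))
           - ( - complex_of_real (2 * pi * real k / real_of_int \<bar>n\<bar>)
                 * exp (\<i> * of_int n * complex_of_real t0))) \<le> C / (real_of_int n)^2"
      using M[OF A] by blast
    show "(\<lambda>n::int. integral {t0 - pi..t0 + pi}
             (\<lambda>t. complex_of_real (chi t) * L (complex_of_real t - \<i> * complex_of_real lam)
                   * exp (\<i> * of_int n * complex_of_real t))
           - ( - complex_of_real (2 * pi * real k / real_of_int \<bar>n\<bar>)
                 * exp (\<i> * of_int n * complex_of_real t0)))
        \<in> O[at_bot](\<lambda>n. 1 / (of_int n)^2)"
    proof (rule bigoI[where c = C])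
      show "\<forall>\<^sub>F n in at_bot. norm (integral {t0 - pi..t0 + pi}
             (\<lambda>t. complex_of_real (chi t) * L (complex_of_real t - \<i> * complex_of_real lam)
                   * exp (\<i> * of_int n * complex_of_real t))
           - ( - complex_of_real (2 * pi * real k / real_of_int \<bar>n\<bar>)
                 * exp (\<i> * of_int n * complex_of_real t0))) \<le> C * norm (1 / (of_int n)^2 :: complex)"
        unfolding eventually_at_bot_linorder
        by (rule exI[of _ "-1"]) (use C in \<open>auto simp: nrm\<close>)
    qed
  qed
qed

end
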